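(* Let $G$ be a unicyclic graph of order $n$ with girth $g$ (so $3\le g\le n$). Then $$SO(G)\le 2\sqrt{(n-g+2)^2+4}+(n-g)\sqrt{(n-g+2)^2+1}+2\sqrt2\,(g-2),$$ with equality if and only if $G$ is isomorphic to the graph $U_{n,g}$ obtained by attaching $n-g$ pendent edges to one vertex of the cycle $C_g$.
   Context: For a graph $G$, $d_G(w)$ denotes the degree of vertex $w$, and the Sombor index is $SO(G)=\sum_{ab\in E(G)}\sqrt{d_G(a)^2+d_G(b)^2}$. A unicyclic graph is a connected graph with exactly one cycle; its girth is the length of that cycle. $C_g$ is the cycle on $g$ vertices. *)

theory Defs
  imports Complex_Main
begin

definition simple_graph :: "'a set \<Rightarrow> 'a set set \<Rightarrow> bool" where
  "simple_graph V E \<longleftrightarrow> finite V \<and> (\<forall>e\<in>E. e \<subseteq> V \<and> card e = 2)"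

definition adj :: "'a set set \<Rightarrow> 'a \<Rightarrow> 'a \<Rightarrow> bool" where
  "adj E u v \<longleftrightarrow> {u, v} \<in> E"

definition connected_graph :: "'a set \<Rightarrow> 'a set set \<Rightarrow> bool" where
  "connected_graph V E \<longleftrightarrow>
     (\<forall>u\<in>V. \<forall>v\<in>V. (u, v) \<in> {(x, y). adj E x y}\<^sup>*)"

definition degree :: "'a set set \<Rightarrow> 'a \<Rightarrow> nat" where
  "degree E v = card {e \<in> E. v \<in> e}"

definition sombor :: "'a set set \<Rightarrow> real" where
  "sombor E = (\<Sum>e\<in>E. sqrt (\<Sum>v\<in>e. (real (degree E v))\<^sup>2))"

definition cycle_edges :: "'a list \<Rightarrow> 'a set set" where
  "cycle_edges vs = {{vs ! i, vs ! ((i + 1) mod length vs)} | i. i < length vs}"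

definition is_cycle :: "'a set \<Rightarrow> 'a set set \<Rightarrow> 'a list \<Rightarrow> bool" where
  "is_cycle V E vs \<longleftrightarrow> distinct vs \<and> 3 \<le> length vs \<and> set vs \<subseteq> V \<and> cycle_edges vs \<subseteq> E"

definition cycles :: "'a set \<Rightarrow> 'a set set \<Rightarrow> 'a set set set" where
  "cycles V E = {cycle_edges vs | vs. is_cycle V E vs}"

definition unicyclic :: "'a set \<Rightarrow> 'a set set \<Rightarrow> bool" where
  "unicyclic V E \<longleftrightarrow> simple_graph V E \<and> connected_graph V E \<and> (\<exists>C. cycles V E = {C})"

definition girth :: "'a set \<Rightarrow> 'a set set \<Rightarrow> nat" where
  "girth V E = (LEAST k. \<exists>vs. is_cycle V E vs \<and> length vs = k)"

definition U_vertices :: "nat \<Rightarrow> nat set" where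
  "U_vertices n = {0..<n}"

definition U_edges :: "nat \<Rightarrow> nat \<Rightarrow> nat set set" where
  "U_edges n g = {{i, (i + 1) mod g} | i. i < g} \<union> {{0, j} | j. g \<le> j \<and> j < n}"

definition graph_iso :: "'a set \<Rightarrow> 'a set set \<Rightarrow> 'b set \<Rightarrow> 'b set set \<Rightarrow> bool" where
  "graph_iso V E W F \<longleftrightarrow> (\<exists>f. bij_betw f V W \<and>
      (\<forall>u\<in>V. \<forall>v\<in>V. {u, v} \<in> E \<longleftrightarrow> {f u, f v} \<in> F) \<and> (\<forall>e\<in>E. e \<subseteq> V))"

end

theory Submission
  imports Defs
begin


lemma cycle_edges_image:
  "cycle_edges vs = (\<lambda>i. {vs!i, vs!((i+1) mod length vs)}) ` {..<length vs}"
  by (auto simp: cycle_edges_def)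

lemma suc_mod: "(i::nat) < l \<Longrightarrow> (i+1) mod l = (if i+1 = l then 0 else i+1)"
  by (cases "i+1 = l") auto

lemma mod_succ_twice_False:
  fixes i p l :: nat
  assumes "i < l" "p < l" "3 \<le> l" "i = (p+1) mod l" "p = (i+1) mod l"
  shows False
proof -
  have h1: "i = (if p+1 = l then 0 else p+1)" using assms(2,4) suc_mod by metis
  have h2: "p = (if i+1 = l then 0 else i+1)" using assms(1,5) suc_mod by metis
  show False
  proof (cases "p+1 = l")
    case True
    then have "i = 0" using h1 by simp
    then have "p = 1" using h2 assms(3) by simp
    then show False using True assms(3) by simp
  next
    case False
    then have "i = p + 1" using h1 by simp
    then have e: "i + 1 = p + 2" by simp
    show False
    proof (cases "p+2 = l")
      case True
      then have "p = 0" using h2 e by metis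
      then show False using True assms(3) by simp
    next
      case False
      then have "p = p + 2" using h2 e by metis
      then show False by simp
    qed
  qed
qed

lemma succ_mod_ne: "(i::nat) < l \<Longrightarrow> 2 \<le> l \<Longrightarrow> (i+1) mod l \<noteq> i"
  using suc_mod[of i l] by (cases "i+1 = l") simp_all

lemma cycle_inj:
  assumes "distinct vs" "3 \<le> length vs"
  shows "inj_on (\<lambda>i. {vs!i, vs!((i+1) mod length vs)}) {..<length vs}"
proof -
  define l where "l = length vs"
  have l3: "3 \<le> l" using assms l_def by simp
  have inj: "inj_on (\<lambda>i. {vs!i, vs!((i+1) mod l)}) {..<l}"
  proof (rule inj_onI)
    fix i p assume i: "i \<in> {..<l}" and p: "p \<in> {..<l}"
      and eq: "{vs!i, vs!((i+1) mod l)} = {vs!p, vs!((p+1) mod l)}"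
    have il: "i < l" and pl: "p < l" using i p by auto
    have sil: "(i+1) mod l < l" and spl: "(p+1) mod l < l" using l3 by auto
    have nth: "\<And>a b. a < l \<Longrightarrow> b < l \<Longrightarrow> vs!a = vs!b \<longleftrightarrow> a = b"
      using assms(1) l_def nth_eq_iff_index_eq by blast
    have "vs!i \<in> {vs!p, vs!((p+1) mod l)}" using eq by blast
    then have A: "i = p \<or> i = (p+1) mod l" using nth il pl spl by auto
    have "vs!((i+1) mod l) \<in> {vs!p, vs!((p+1) mod l)}" using eq by blast
    then have B: "(i+1) mod l = p \<or> (i+1) mod l = (p+1) mod l" using nth sil pl spl by auto
    show "i = p"
    proof (rule ccontr)
      assume ne: "i \<noteq> p"
      then have ip: "i = (p+1) mod l" using A by simp
      have "(i+1) mod l \<noteq> (p+1) mod l"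
        using succ_mod_ne[OF il] l3 ip by simp
      then have "p = (i+1) mod l" using B by simp
      then show False using mod_succ_twice_False[OF il pl l3 ip] by simp
    qed
  qed
  then show ?thesis unfolding l_def .
qed

lemma card_cycle_edges:
  assumes "distinct vs" "3 \<le> length vs"
  shows "card (cycle_edges vs) = length vs"
  unfolding cycle_edges_image using card_image[OF cycle_inj[OF assms]] by simp


lemma cycle_edges_subset: "e \<in> cycle_edges vs \<Longrightarrow> e \<subseteq> set vs"
proof -
  assume "e \<in> cycle_edges vs"
  then obtain i where il: "i < length vs" and e: "e = {vs!i, vs!((i+1) mod length vs)}"
    unfolding cycle_edges_def by auto
  have "0 < length vs" using il by linarith
  then have "(i+1) mod length vs < length vs" by (rule mod_less_divisor)
  then show ?thesis using e il nth_mem by auto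
qed

lemma cycle_vertex_degree:
  assumes cyc: "is_cycle V E vs" and fin: "finite E" and x: "x \<in> set vs"
  shows "2 \<le> degree E x"
proof -
  define l where "l = length vs"
  have l3: "3 \<le> l" and dist: "distinct vs" and sub: "cycle_edges vs \<subseteq> E"
    using cyc l_def unfolding is_cycle_def by auto
  obtain i where il: "i < l" and xi: "x = vs!i" using x l_def by (metis in_set_conv_nth)
  define j where "j = (if i = 0 then l - 1 else i - 1)"
  have jl: "j < l" using l3 il j_def by auto
  have js: "(j + 1) mod l = i"
    using l3 il j_def by (cases "i = 0") simp_all
  have sil: "(i+1) mod l < l" using l3 by simp
  have ne: "(i+1) mod l \<noteq> j"
    using suc_mod[OF il] l3 il j_def by (cases "i = 0"; cases "i+1 = l") simp_all
  have ne2: "(i+1) mod l \<noteq> i" using succ_mod_ne[OF il] l3 by simp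
  have nth: "\<And>a b. a < l \<Longrightarrow> b < l \<Longrightarrow> vs!a = vs!b \<longleftrightarrow> a = b"
    using dist l_def nth_eq_iff_index_eq by blast
  define e1 where "e1 = {vs!i, vs!((i+1) mod l)}"
  define e2 where "e2 = {vs!j, vs!((j+1) mod l)}"
  have e1E: "e1 \<in> E" using sub il unfolding e1_def cycle_edges_def l_def by auto
  have e2E: "e2 \<in> E" using sub jl unfolding e2_def cycle_edges_def l_def by auto
  have "vs!((i+1) mod l) \<notin> e2"
    unfolding e2_def js using nth[OF sil jl] nth[OF sil il] ne ne2 by auto
  then have e12: "e1 \<noteq> e2" unfolding e1_def by auto
  have "{e1, e2} \<subseteq> {e \<in> E. x \<in> e}" using e1E e2E xi js unfolding e1_def e2_def by auto
  moreover have "finite {e \<in> E. x \<in> e}" using fin by simp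
  ultimately have "card {e1, e2} \<le> card {e \<in> E. x \<in> e}" by (rule card_mono[rotated])
  then show ?thesis using e12 unfolding degree_def by simp
qed

lemma sum_edges_swap:
  fixes h :: "'a \<Rightarrow> real"
  assumes finV: "finite V" and sub: "\<forall>e\<in>E. e \<subseteq> V"
  shows "(\<Sum>e\<in>E. \<Sum>v\<in>e. h v) = (\<Sum>v\<in>V. real (degree E v) * h v)"
proof -
  have finE: "finite E" using finV sub by (meson Pow_iff finite_Pow_iff finite_subset subsetI)
  have "(\<Sum>e\<in>E. \<Sum>v\<in>e. h v) = (\<Sum>e\<in>E. \<Sum>v\<in>V. if v \<in> e then h v else 0)"
  proof (rule sum.cong[OF refl])
    fix e assume "e \<in> E"
    then have "e \<subseteq> V" using sub by auto
    then have "{v \<in> V. v \<in> e} = e" by auto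
    then show "(\<Sum>v\<in>e. h v) = (\<Sum>v\<in>V. if v \<in> e then h v else 0)"
      using sum.inter_filter[OF finV, of h "\<lambda>v. v \<in> e"] by simp
  qed
  also have "\<dots> = (\<Sum>v\<in>V. \<Sum>e\<in>E. if v \<in> e then h v else 0)" by (rule sum.swap)
  also have "\<dots> = (\<Sum>v\<in>V. real (degree E v) * h v)"
  proof (rule sum.cong[OF refl])
    fix v
    have "(\<Sum>e\<in>E. if v \<in> e then h v else 0) = (\<Sum>e\<in>{e\<in>E. v \<in> e}. h v)"
      using sum.inter_filter[OF finE, of "\<lambda>_. h v" "\<lambda>e. v \<in> e"] by simp
    also have "\<dots> = real (degree E v) * h v" unfolding degree_def by simp
    finally show "(\<Sum>e\<in>E. if v \<in> e then h v else 0) = real (degree E v) * h v" .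
  qed
  finally show ?thesis .
qed

lemma handshake:
  assumes "simple_graph V E"
  shows "(\<Sum>v\<in>V. degree E v) = 2 * card E"
proof -
  have finV: "finite V" and sub: "\<forall>e\<in>E. e \<subseteq> V" and c2: "\<forall>e\<in>E. card e = 2"
    using assms unfolding simple_graph_def by auto
  have "real (\<Sum>v\<in>V. degree E v) = (\<Sum>v\<in>V. real (degree E v) * 1)" by simp
  also have "\<dots> = (\<Sum>e\<in>E. \<Sum>v\<in>e. (1::real))" using sum_edges_swap[OF finV sub, of "\<lambda>_. 1"] by simp
  also have "\<dots> = (\<Sum>e\<in>E. 2)" using c2 by simp
  also have "\<dots> = real (2 * card E)" by simp
  finally show ?thesis by linarith
qed

lemma connected_degree_pos:
  assumes "connected_graph V E" "v \<in> V" "u \<in> V" "u \<noteq> v" "finite E"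
  shows "1 \<le> degree E v"
proof -
  have "(v, u) \<in> {(x, y). adj E x y}\<^sup>*" using assms unfolding connected_graph_def by auto
  then obtain x where "adj E v x" using assms(4)
    by (cases rule: converse_rtranclE) auto
  then have "{v, x} \<in> {e \<in> E. v \<in> e}" unfolding adj_def by auto
  then have "{e \<in> E. v \<in> e} \<noteq> {}" by blast
  then show ?thesis using assms(5) unfolding degree_def
    by (simp add: Suc_leI card_gt_0_iff)
qed

lemma rotate_cycle_edges_sub:
  assumes "3 \<le> length vs"
  shows "cycle_edges (rotate j vs) \<subseteq> cycle_edges vs"
proof
  fix e assume "e \<in> cycle_edges (rotate j vs)"
  then obtain i where il: "i < length vs"
    and e: "e = {rotate j vs ! i, rotate j vs ! ((i+1) mod length vs)}"
    unfolding cycle_edges_def by auto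
  define l where "l = length vs"
  have l0: "0 < l" using assms l_def by linarith
  have "rotate j vs ! i = vs ! ((j + i) mod l)" using nth_rotate[OF il] l_def by simp
  have sl: "(i+1) mod l < length vs" using mod_less_divisor[OF l0] l_def by simp
  have "rotate j vs ! i = vs ! ((j + i) mod l)" using nth_rotate[OF il] l_def by simp
  moreover have "rotate j vs ! ((i+1) mod l) = vs ! ((j + (i+1) mod l) mod l)"
    using nth_rotate[OF sl] l_def by simp
  moreover have "(j + (i+1) mod l) mod l = ((j + i) mod l + 1) mod l"
    by (metis mod_add_right_eq mod_add_left_eq add.assoc)
  ultimately have "e = {vs ! ((j+i) mod l), vs ! (((j+i) mod l + 1) mod l)}" using e l_def by simp
  then show "e \<in> cycle_edges vs" unfolding cycle_edges_def l_def using l0 l_def by auto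
qed

lemma rotate_cycle_edges:
  assumes "3 \<le> length vs"
  shows "cycle_edges (rotate j vs) = cycle_edges vs"
proof
  show "cycle_edges (rotate j vs) \<subseteq> cycle_edges vs" using rotate_cycle_edges_sub[OF assms] .
  define r where "r = rotate j vs"
  have "rotate (length vs - j mod length vs) r = rotate (length vs - j mod length vs + j) vs"
    unfolding r_def by (simp add: rotate_rotate)
  also have "\<dots> = vs"
  proof (rule rotate_id)
    have "(length vs - j mod length vs + j) mod length vs = (length vs - j mod length vs + j mod length vs) mod length vs"
      by (simp add: mod_add_right_eq)
    also have "\<dots> = 0"
    proof -
      have "j mod length vs < length vs" using assms by (intro mod_less_divisor) linarith
      then have "length vs - j mod length vs + j mod length vs = length vs" by linarith
      then show ?thesis by simp
    qed
    finally show "(length vs - j mod length vs + j) mod length vs = 0" .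
  qed
  finally have "vs = rotate (length vs - j mod length vs) r" by simp
  then show "cycle_edges vs \<subseteq> cycle_edges (rotate j vs)"
    using rotate_cycle_edges_sub[of r] assms unfolding r_def by (metis length_rotate)
qed

lemma rotate_is_cycle:
  assumes "is_cycle V E vs"
  shows "is_cycle V E (rotate j vs)" "cycle_edges (rotate j vs) = cycle_edges vs"
  using assms rotate_cycle_edges[of vs j] unfolding is_cycle_def by auto


lemma simple_finite_E: "simple_graph V E \<Longrightarrow> finite E"
  unfolding simple_graph_def by (meson Pow_iff finite_Pow_iff finite_subset subsetI)

lemma edge_other:
  assumes "simple_graph V E" "e \<in> E" "x \<in> e"
  shows "\<exists>y. y \<noteq> x \<and> e = {x, y} \<and> y \<in> V"
proof -
  have c: "card e = 2" and s: "e \<subseteq> V" using assms unfolding simple_graph_def by auto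
  then obtain a b where ab: "e = {a, b}" "a \<noteq> b" by (meson card_2_iff)
  then show ?thesis using assms(3) s by auto
qed

lemma two_elems:
  assumes "finite S" "2 \<le> card S"
  shows "\<exists>a b. a \<in> S \<and> b \<in> S \<and> a \<noteq> b"
proof -
  have "S \<noteq> {}" using assms by auto
  then obtain a where a: "a \<in> S" by blast
  have "card (S - {a}) = card S - 1" using a assms(1) by simp
  then have "0 < card (S - {a})" using assms(2) by linarith
  then have "S - {a} \<noteq> {}" by (metis card.empty less_irrefl)
  then obtain b where "b \<in> S - {a}" by blast
  then show ?thesis using a by blast
qed

lemma min_deg2_cycle:
  assumes sg: "simple_graph V E" and ne: "V \<noteq> {}" and deg: "\<forall>v\<in>V. 2 \<le> degree E v"
  shows "\<exists>vs. is_cycle V E vs"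
proof -
  have finV: "finite V" using sg unfolding simple_graph_def by simp
  have finE: "finite E" using simple_finite_E[OF sg] .
  define P where "P ps \<longleftrightarrow> ps \<noteq> [] \<and> set ps \<subseteq> V \<and> distinct ps \<and>
      (\<forall>i. i+1 < length ps \<longrightarrow> {ps!i, ps!(i+1)} \<in> E)" for ps
  define Q where "Q k \<longleftrightarrow> (\<exists>ps. P ps \<and> length ps = k)" for k
  obtain v where v: "v \<in> V" using ne by blast
  have "P [v]" unfolding P_def using v by simp
  then have Q1: "Q 1" unfolding Q_def by force
  have bound: "\<forall>k. Q k \<longrightarrow> k \<le> card V"
  proof (intro allI impI)
    fix k assume "Q k"
    then obtain ps where "P ps" "length ps = k" unfolding Q_def by blast
    then show "k \<le> card V" unfolding P_def using card_mono[OF finV] distinct_card by metis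
  qed
  obtain k where Qk: "Q k" and kmax: "\<forall>k'. Q k' \<longrightarrow> k' \<le> k"
    using Nat.ex_has_greatest_nat[OF Q1 bound] by blast
  obtain ps where Pps: "P ps" and lps: "length ps = k" using Qk unfolding Q_def by blast
  have max: "\<And>qs. P qs \<Longrightarrow> length qs \<le> length ps"
    using kmax lps unfolding Q_def by blast
  define l where "l = length ps"
  have l1: "1 \<le> l" using Pps l_def unfolding P_def by (cases ps) auto
  define x where "x = ps!(l-1)"
  have psV: "set ps \<subseteq> V" and dist: "distinct ps"
    and pe: "\<And>i. i+1 < l \<Longrightarrow> {ps!i, ps!(i+1)} \<in> E"
    using Pps l_def unfolding P_def by auto
  have xV: "x \<in> V" using psV l1 x_def l_def by auto
  have "2 \<le> card {e \<in> E. x \<in> e}" using deg xV unfolding degree_def by auto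
  then obtain e1 e2 where e1: "e1 \<in> E" "x \<in> e1" and e2: "e2 \<in> E" "x \<in> e2" and e12: "e1 \<noteq> e2"
    using two_elems[of "{e \<in> E. x \<in> e}"] finE by auto
  obtain y1 where y1: "y1 \<noteq> x" "e1 = {x, y1}" "y1 \<in> V" using edge_other[OF sg e1] by blast
  obtain y2 where y2: "y2 \<noteq> x" "e2 = {x, y2}" "y2 \<in> V" using edge_other[OF sg e2] by blast
  have y12: "y1 \<noteq> y2" using e12 y1 y2 by auto
  obtain y where y: "y \<noteq> x" "{x, y} \<in> E" "y \<in> V" and yprev: "2 \<le> l \<Longrightarrow> y \<noteq> ps!(l-2)"
  proof (cases "2 \<le> l \<and> y1 = ps!(l-2)")
    case True
    then show ?thesis using that[of y2] y2 e2 y12 by auto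
  next
    case False
    then show ?thesis using that[of y1] y1 e1 by auto
  qed
  show ?thesis
  proof (cases "y \<in> set ps")
    case False
    have "P (ps @ [y])" unfolding P_def
    proof (intro conjI allI impI)
      show "ps @ [y] \<noteq> []" by simp
      show "set (ps @ [y]) \<subseteq> V" using psV y by simp
      show "distinct (ps @ [y])" using dist False by simp
      fix i assume i: "i + 1 < length (ps @ [y])"
      show "{(ps @ [y]) ! i, (ps @ [y]) ! (i + 1)} \<in> E"
      proof (cases "i + 1 < l")
        case True
        then show ?thesis using pe[OF True] l_def by (simp add: nth_append)
      next
        case False
        then have "i = l - 1" using i l_def by simp
        then have il': "i < length ps" and i1: "i + 1 = length ps" using l1 l_def by simp_all
        have "(ps @ [y]) ! i = ps ! i" using il' by (simp add: nth_append)
        then have "(ps @ [y]) ! i = x" using \<open>i = l - 1\<close> x_def by simp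
        moreover have "(ps @ [y]) ! (i+1) = y" using i1 by simp
        ultimately have "(ps @ [y]) ! i = x" "(ps @ [y]) ! (i+1) = y" by simp_all
        then show ?thesis using y by simp
      qed
    qed
    then have "length (ps @ [y]) \<le> length ps" by (rule max)
    then show ?thesis by simp
  next
    case True
    then obtain j where jl: "j < l" and yj: "y = ps!j" using l_def by (metis in_set_conv_nth)
    have nth: "\<And>a b. a < l \<Longrightarrow> b < l \<Longrightarrow> ps!a = ps!b \<longleftrightarrow> a = b"
      using dist l_def nth_eq_iff_index_eq by blast
    have j1: "j \<noteq> l - 1" using y(1) yj x_def nth jl l1 by auto
    have j2: "2 \<le> l \<Longrightarrow> j \<noteq> l - 2" using yprev yj by auto
    have j3: "j + 3 \<le> l" using j1 j2 jl by linarith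
    define cs where "cs = drop j ps"
    have lcs: "length cs = l - j" using cs_def l_def by simp
    have "is_cycle V E cs" unfolding is_cycle_def
    proof (intro conjI)
      show "distinct cs" using dist cs_def by simp
      show "3 \<le> length cs" using lcs j3 by simp
      show "set cs \<subseteq> V" using psV cs_def by (meson order_trans set_drop_subset)
      show "cycle_edges cs \<subseteq> E"
      proof
        fix e assume "e \<in> cycle_edges cs"
        then obtain i where il: "i < length cs" and e: "e = {cs!i, cs!((i+1) mod length cs)}"
          unfolding cycle_edges_def by auto
        have ci: "cs!i = ps!(j+i)" using il cs_def l_def lcs by simp
        show "e \<in> E"
        proof (cases "i + 1 < length cs")
          case True
          then have "(i+1) mod length cs = i+1" by simp
          moreover have "cs!(i+1) = ps!(j+i+1)" using True cs_def lcs l_def by simp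
          ultimately have "e = {ps!(j+i), ps!(j+i+1)}" using e ci by simp
          then show ?thesis using pe[of "j+i"] True lcs by simp
        next
          case False
          then have ii: "i = length cs - 1" using il by simp
          then have "i + 1 = length cs" using il by simp
          then have "(i+1) mod length cs = 0" by simp
          moreover have "cs!0 = y" using cs_def yj jl l_def by simp
          moreover have "cs!i = x" using ci ii lcs x_def jl by simp
          ultimately have "e = {x, y}" using e by simp
          then show ?thesis using y by simp
        qed
      qed
    qed
    then show ?thesis by blast
  qed
qed



lemma is_cycle_mono: "is_cycle V E vs \<Longrightarrow> V \<subseteq> V' \<Longrightarrow> E \<subseteq> E' \<Longrightarrow> is_cycle V' E' vs"
  unfolding is_cycle_def by auto

lemma acyclic_card:
  assumes "simple_graph V E" "\<not> (\<exists>vs. is_cycle V E vs)" "V \<noteq> {}"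
  shows "card E < card V"
  using assms
proof (induction "card V" arbitrary: V E rule: less_induct)
  case less
  have finV: "finite V" using less.prems unfolding simple_graph_def by simp
  have finE: "finite E" using simple_finite_E less.prems by blast
  have "\<exists>v\<in>V. degree E v \<le> 1"
  proof (rule ccontr)
    assume "\<not> (\<exists>v\<in>V. degree E v \<le> 1)"
    then have "\<forall>v\<in>V. 2 \<le> degree E v" by auto
    then show False using min_deg2_cycle less.prems by blast
  qed
  then obtain v where v: "v \<in> V" and dv: "degree E v \<le> 1" by blast
  define V' where "V' = V - {v}"
  define E' where "E' = {e \<in> E. v \<notin> e}"
  have EE: "E = E' \<union> {e \<in> E. v \<in> e}" unfolding E'_def by auto
  have cE: "card E \<le> card E' + 1"
  proof -
    have "card (E' \<union> {e \<in> E. v \<in> e}) \<le> card E' + card {e \<in> E. v \<in> e}" by (rule card_Un_le)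
    then have "card E \<le> card E' + card {e \<in> E. v \<in> e}" unfolding EE[symmetric] .
    then show ?thesis using dv unfolding degree_def by simp
  qed
  show ?case
  proof (cases "V' = {}")
    case True
    then have Vv: "V = {v}" using v V'_def by auto
    have "E = {}"
    proof (rule ccontr)
      assume "E \<noteq> {}"
      then obtain e where "e \<in> E" by blast
      then have "e \<subseteq> {v}" "card e = 2" using less.prems Vv unfolding simple_graph_def by auto
      then show False using card_mono[of "{v}" e] by simp
    qed
    then show ?thesis using Vv by simp
  next
    case False
    have sg': "simple_graph V' E'" using less.prems unfolding simple_graph_def V'_def E'_def by auto
    have sub1: "V' \<subseteq> V" and sub2: "E' \<subseteq> E" unfolding V'_def E'_def by auto
    have nc': "\<not> (\<exists>vs. is_cycle V' E' vs)"
    proof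
      assume "\<exists>vs. is_cycle V' E' vs"
      then obtain vs where "is_cycle V' E' vs" by blast
      then have "is_cycle V E vs" using sub1 sub2 by (rule is_cycle_mono)
      then show False using less.prems(2) by blast
    qed
    have lt: "card V' < card V" unfolding V'_def using card_Diff1_less[OF finV v] .
    have "card E' < card V'" using less.hyps[OF lt sg' nc' False] by simp
    then show ?thesis using cE lt V'_def v finV by simp
  qed
qed



lemma unicyclic_facts:
  assumes uni: "unicyclic V E" and g: "girth V E = g"
  shows "\<exists>vs. is_cycle V E vs \<and> length vs = g \<and>
     (\<forall>ws. is_cycle V E ws \<longrightarrow> cycle_edges ws = cycle_edges vs) \<and>
     3 \<le> g \<and> g \<le> card V \<and> card E \<le> card V"
proof -
  have sg: "simple_graph V E" using uni unfolding unicyclic_def by simp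
  have finV: "finite V" using sg unfolding simple_graph_def by simp
  have finE: "finite E" using simple_finite_E[OF sg] .
  obtain C where C: "cycles V E = {C}" using uni unfolding unicyclic_def by blast
  then have "C \<in> cycles V E" by simp
  then obtain vs where vs: "is_cycle V E vs" and Cvs: "C = cycle_edges vs"
    unfolding cycles_def by blast
  have same: "\<forall>ws. is_cycle V E ws \<longrightarrow> cycle_edges ws = cycle_edges vs"
    using C Cvs unfolding cycles_def by blast
  have lens: "\<And>ws. is_cycle V E ws \<Longrightarrow> length ws = length vs"
  proof -
    fix ws assume ws: "is_cycle V E ws"
    have "card (cycle_edges ws) = length ws" using ws card_cycle_edges unfolding is_cycle_def by blast
    moreover have "card (cycle_edges vs) = length vs" using vs card_cycle_edges unfolding is_cycle_def by blast
    ultimately show "length ws = length vs" using same ws by simp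
  qed
  have gl: "g = length vs" unfolding g[symmetric] girth_def
  proof (rule Least_equality)
    show "\<exists>ws. is_cycle V E ws \<and> length ws = length vs" using vs by blast
    show "\<And>y. \<exists>ws. is_cycle V E ws \<and> length ws = y \<Longrightarrow> length vs \<le> y" using lens by auto
  qed
  have g3: "3 \<le> g" using vs gl unfolding is_cycle_def by simp
  have gn: "g \<le> card V"
  proof -
    have "card (set vs) = length vs" using vs distinct_card unfolding is_cycle_def by blast
    moreover have "card (set vs) \<le> card V" using vs finV card_mono unfolding is_cycle_def by blast
    ultimately show ?thesis using gl by simp
  qed
  have cE: "card E \<le> card V"
  proof -
    have "cycle_edges vs \<noteq> {}" using card_cycle_edges[of vs] vs unfolding is_cycle_def by force
    then obtain e0 where e0: "e0 \<in> cycle_edges vs" by blast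
    then have e0E: "e0 \<in> E" using vs unfolding is_cycle_def by blast
    define E' where "E' = E - {e0}"
    have sg': "simple_graph V E'" using sg unfolding simple_graph_def E'_def by auto
    have nc: "\<not> (\<exists>ws. is_cycle V E' ws)"
    proof
      assume "\<exists>ws. is_cycle V E' ws"
      then obtain ws where ws: "is_cycle V E' ws" by blast
      then have "is_cycle V E ws" using is_cycle_mono[of V E' ws V E] E'_def by blast
      then have "cycle_edges ws = cycle_edges vs" using same by blast
      then have "e0 \<in> E'" using ws e0 unfolding is_cycle_def by blast
      then show False unfolding E'_def by simp
    qed
    have "V \<noteq> {}" using vs unfolding is_cycle_def by (cases vs) auto
    then have "card E' < card V" using acyclic_card[OF sg' nc] by simp
    moreover have "card E' = card E - 1" using e0E finE E'_def by simp
    moreover have "card E > 0" using e0E finE card_gt_0_iff by blast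
    ultimately show ?thesis by linarith
  qed
  show ?thesis using vs gl same g3 gn cE by blast
qed


lemma sum_sq_le:
  fixes x y u v :: real
  assumes "0 \<le> x" "0 \<le> y" "0 \<le> u" "0 \<le> v" "x^2 + y^2 = u^2 + v^2" "x*y \<le> u*v"
  shows "x + y \<le> u + v"
proof (rule power2_le_imp_le)
  show "(x + y)^2 \<le> (u + v)^2" using assms(5,6) by (simp add: power2_sum)
  show "0 \<le> u + v" using assms by simp
qed

lemma sum_sq_less:
  fixes x y u v :: real
  assumes "0 \<le> x" "0 \<le> y" "0 \<le> u" "0 \<le> v" "x^2 + y^2 = u^2 + v^2" "x*y < u*v"
  shows "x + y < u + v"
proof (rule power2_less_imp_less)
  show "(x + y)^2 < (u + v)^2" using assms(5,6) by (simp add: power2_sum)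
  show "0 \<le> u + v" using assms by simp
qed

lemma sqrt8: "sqrt 8 = 2 * sqrt 2"
proof -
  have "sqrt 8 = sqrt (4 * 2)" by simp
  also have "\<dots> = sqrt 4 * sqrt 2" by (rule real_sqrt_mult)
  also have "sqrt 4 = (2::real)" by (simp add: real_sqrt_unique)
  finally show ?thesis by simp
qed

lemma edge22:
  fixes A B :: real
  assumes "4 \<le> A" "4 \<le> B"
  shows "sqrt (A + B) + 2 * sqrt 2 \<le> sqrt (A + 4) + sqrt (B + 4)"
proof -
  have p: "0 \<le> (A - 4) * (B - 4)" using assms by simp
  have eq: "(A + 4) * (B + 4) - (A + B) * 8 = (A - 4) * (B - 4)" by (simp add: algebra_simps)
  have prod: "(A + B) * 8 \<le> (A + 4) * (B + 4)" using p eq by linarith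
  have "sqrt (A + B) + sqrt 8 \<le> sqrt (A + 4) + sqrt (B + 4)"
  proof (rule sum_sq_le)
    show "(sqrt (A + B))^2 + (sqrt 8)^2 = (sqrt (A + 4))^2 + (sqrt (B + 4))^2"
      using assms by simp
    have "sqrt (A + B) * sqrt 8 = sqrt ((A + B) * 8)" by (rule real_sqrt_mult[symmetric])
    also have "\<dots> \<le> sqrt ((A + 4) * (B + 4))" using prod by simp
    also have "\<dots> = sqrt (A + 4) * sqrt (B + 4)" by (rule real_sqrt_mult)
    finally show "sqrt (A + B) * sqrt 8 \<le> sqrt (A + 4) * sqrt (B + 4)" .
  qed (use assms in auto)
  then show ?thesis using sqrt8 by simp
qed

lemma edgeleaf:
  fixes A Q :: real
  assumes "1 \<le> A" "A \<le> Q"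
  shows "sqrt (A + 1) + sqrt (Q + 4) \<le> sqrt (Q + 1) + sqrt (A + 4)"
    and "A < Q \<Longrightarrow> sqrt (A + 1) + sqrt (Q + 4) < sqrt (Q + 1) + sqrt (A + 4)"
proof -
  have eq: "(Q + 1) * (A + 4) - (A + 1) * (Q + 4) = 3 * (Q - A)" by (simp add: algebra_simps)
  have sq: "(sqrt (A + 1))^2 + (sqrt (Q + 4))^2 = (sqrt (Q + 1))^2 + (sqrt (A + 4))^2"
    using assms by simp
  have pr: "sqrt (A + 1) * sqrt (Q + 4) = sqrt ((A + 1) * (Q + 4))"
    "sqrt (Q + 1) * sqrt (A + 4) = sqrt ((Q + 1) * (A + 4))" by (simp_all add: real_sqrt_mult)
  show "sqrt (A + 1) + sqrt (Q + 4) \<le> sqrt (Q + 1) + sqrt (A + 4)"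
  proof (rule sum_sq_le[OF _ _ _ _ sq])
    show "sqrt (A + 1) * sqrt (Q + 4) \<le> sqrt (Q + 1) * sqrt (A + 4)"
      unfolding pr using eq assms by simp
  qed (use assms in auto)
  assume "A < Q"
  show "sqrt (A + 1) + sqrt (Q + 4) < sqrt (Q + 1) + sqrt (A + 4)"
  proof (rule sum_sq_less[OF _ _ _ _ sq])
    show "sqrt (A + 1) * sqrt (Q + 4) < sqrt (Q + 1) * sqrt (A + 4)"
      unfolding pr using eq assms \<open>A < Q\<close> by simp
  qed (use assms in auto)
qed

lemma diff_small:
  fixes Q :: real
  assumes "4 \<le> Q"
  shows "2 * sqrt (Q + 4) < 2 * sqrt (Q + 1) + sqrt 2"
proof (rule power2_less_imp_less)
  have s: "sqrt (Q + 1) * sqrt 2 = sqrt (2 * Q + 2)"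
    by (simp add: real_sqrt_mult[symmetric] algebra_simps)
  have "5/2 < sqrt (2 * Q + 2)" using assms by (intro real_less_rsqrt) (simp add: power2_eq_square)
  then have "10 < 4 * (sqrt (Q + 1) * sqrt 2)" using s by simp
  moreover have "(2 * sqrt (Q + 1) + sqrt 2)^2 = 4 * (Q + 1) + 4 * (sqrt (Q + 1) * sqrt 2) + 2"
    using assms by (simp add: power2_sum power_mult_distrib algebra_simps)
  moreover have "(2 * sqrt (Q + 4))^2 = 4 * (Q + 4)" using assms by (simp add: power_mult_distrib)
  ultimately show "(2 * sqrt (Q + 4))^2 < (2 * sqrt (Q + 1) + sqrt 2)^2" by simp
  show "0 \<le> 2 * sqrt (Q + 1) + sqrt 2" using assms by simp
qed


definition cc :: "real \<Rightarrow> real" where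
  "cc D = sqrt (D^2 + 1) - sqrt (D^2 + 4) + sqrt 2"

definition phi :: "real \<Rightarrow> nat \<Rightarrow> real" where
  "phi D d = (if d = 1 then cc D else sqrt ((real d)^2 + 4) - sqrt 2)"

definition q :: "nat \<Rightarrow> real" where
  "q m = real m * (sqrt ((real m)^2 + 4) - sqrt 2)"

lemma edge_bound:
  assumes a1: "1 \<le> a" and b1: "1 \<le> b" and aD: "real a \<le> D" and bD: "real b \<le> D" and D2: "2 \<le> D"
  shows "sqrt ((real a)^2 + (real b)^2) \<le> phi D a + phi D b"
    and "a = 1 \<Longrightarrow> real b \<noteq> D \<Longrightarrow> sqrt ((real a)^2 + (real b)^2) < phi D a + phi D b"
proof -
  have sq4: "4 \<le> x^2" if "2 \<le> x" for x :: real
  proof -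
    have "2 * 2 \<le> x * x" using that by (intro mult_mono) simp_all
    then show ?thesis by (simp add: power2_eq_square)
  qed
  have Q4: "4 \<le> D^2" using sq4[OF D2] .
  have leafcase: "sqrt (1 + (real b)^2) \<le> cc D + (sqrt ((real b)^2 + 4) - sqrt 2)
      \<and> (real b < D \<longrightarrow> sqrt (1 + (real b)^2) < cc D + (sqrt ((real b)^2 + 4) - sqrt 2))"
    if bb: "2 \<le> b" "real b \<le> D" for b
  proof -
    have B1: "1 \<le> (real b)^2" using bb by simp
    have BQ: "(real b)^2 \<le> D^2" using bb by (simp add: power_mono)
    have h1: "sqrt ((real b)^2 + 1) + sqrt (D^2 + 4) \<le> sqrt (D^2 + 1) + sqrt ((real b)^2 + 4)"
      using edgeleaf(1)[OF B1 BQ] .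
    have e: "sqrt (1 + (real b)^2) = sqrt ((real b)^2 + 1)" by (simp add: add.commute)
    show ?thesis
    proof (intro conjI impI)
      show "sqrt (1 + (real b)^2) \<le> cc D + (sqrt ((real b)^2 + 4) - sqrt 2)"
        using h1 e unfolding cc_def by linarith
      assume "real b < D"
      then have "(real b)^2 < D^2" by (intro power_strict_mono) simp_all
      then have h2: "sqrt ((real b)^2 + 1) + sqrt (D^2 + 4) < sqrt (D^2 + 1) + sqrt ((real b)^2 + 4)"
        using edgeleaf(2)[OF B1 BQ] by simp
      show "sqrt (1 + (real b)^2) < cc D + (sqrt ((real b)^2 + 4) - sqrt 2)"
        using h2 e unfolding cc_def by linarith
    qed
  qed
  have onecase: "sqrt 2 < 2 * cc D" using diff_small[OF Q4] unfolding cc_def by simp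
  show "sqrt ((real a)^2 + (real b)^2) \<le> phi D a + phi D b"
  proof (cases "a = 1")
    case True
    show ?thesis
    proof (cases "b = 1")
      case True
      then show ?thesis using onecase \<open>a = 1\<close> unfolding phi_def by simp
    next
      case False
      then have "2 \<le> b" using b1 by simp
      then show ?thesis using leafcase[OF _ bD] True False unfolding phi_def by simp
    qed
  next
    case False
    then have a2: "2 \<le> a" using a1 by simp
    show ?thesis
    proof (cases "b = 1")
      case True
      then show ?thesis using leafcase[OF a2 aD] False unfolding phi_def by (simp add: add.commute)
    next
      case False
      then have b2: "2 \<le> b" using b1 by simp
      have A4: "4 \<le> (real a)^2" using a2 by (intro sq4) simp
      have B4: "4 \<le> (real b)^2" using b2 by (intro sq4) simp
      show ?thesis using edge22[OF A4 B4] \<open>a \<noteq> 1\<close> False unfolding phi_def by simp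
    qed
  qed
  assume a: "a = 1" and bne: "real b \<noteq> D"
  show "sqrt ((real a)^2 + (real b)^2) < phi D a + phi D b"
  proof (cases "b = 1")
    case True
    then show ?thesis using onecase a unfolding phi_def by simp
  next
    case False
    then have "2 \<le> b" using b1 by simp
    moreover have "real b < D" using bD bne by simp
    ultimately show ?thesis using leafcase[OF _ bD] a False unfolding phi_def by simp
  qed
qed


definition rr :: "real \<Rightarrow> real" where "rr x = x * sqrt (x^2 + 4) - x^2"

lemma rr_nonneg: "0 \<le> x \<Longrightarrow> 0 \<le> rr x"
proof -
  assume x: "0 \<le> x"
  have "x \<le> sqrt (x^2 + 4)" by (rule real_le_rsqrt) simp
  then have "x * x \<le> x * sqrt (x^2 + 4)" using x by (rule mult_left_mono)
  then show ?thesis unfolding rr_def by (simp add: power2_eq_square)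
qed

lemma rr_less2: "0 \<le> x \<Longrightarrow> rr x < 2"
proof -
  assume x: "0 \<le> x"
  have "(x * sqrt (x^2 + 4))^2 < (x^2 + 2)^2"
    by (simp add: power_mult_distrib power2_sum algebra_simps power2_eq_square)
  then have "x * sqrt (x^2 + 4) < x^2 + 2"
    by (rule power2_less_imp_less) simp
  then show ?thesis unfolding rr_def by simp
qed

lemma rr_eq: "0 \<le> x \<Longrightarrow> rr x = 4 * x / (sqrt (x^2 + 4) + x)"
proof -
  assume x: "0 \<le> x"
  define s where "s = sqrt (x^2 + 4)"
  have s2: "s^2 = x^2 + 4" unfolding s_def by simp
  have sp: "0 < s + x" unfolding s_def using x
    by (metis add_pos_nonneg real_sqrt_gt_zero add_nonneg_pos zero_le_power2 zero_less_numeral)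
  have "rr x * (s + x) = x * (s^2 - x^2)" unfolding rr_def s_def[symmetric]
    by (simp add: algebra_simps power2_eq_square)
  also have "\<dots> = 4 * x" using s2 by simp
  finally have "rr x * (s + x) = 4 * x" .
  then show ?thesis using sp unfolding s_def[symmetric] by (simp add: field_simps)
qed

lemma rr_mono: "0 \<le> x \<Longrightarrow> x \<le> y \<Longrightarrow> rr x \<le> rr y"
proof -
  assume x: "0 \<le> x" and xy: "x \<le> y"
  have y: "0 \<le> y" using x xy by simp
  define sx where "sx = sqrt (x^2 + 4)"
  define sy where "sy = sqrt (y^2 + 4)"
  have sxp: "0 < sx + x" unfolding sx_def using x
    by (metis add_pos_nonneg real_sqrt_gt_zero add_nonneg_pos zero_le_power2 zero_less_numeral)
  have syp: "0 < sy + y" unfolding sy_def using y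
    by (metis add_pos_nonneg real_sqrt_gt_zero add_nonneg_pos zero_le_power2 zero_less_numeral)
  have x2y2: "x^2 \<le> y^2" using x xy by (simp add: power_mono)
  have key: "x * sy \<le> y * sx"
  proof -
    have "x * sy = sqrt (x^2 * (y^2 + 4))" unfolding sy_def using x by (simp add: real_sqrt_mult)
    also have "\<dots> \<le> sqrt (y^2 * (x^2 + 4))" using x2y2 by (simp add: algebra_simps)
    also have "\<dots> = y * sx" unfolding sx_def using y by (simp add: real_sqrt_mult)
    finally show ?thesis .
  qed
  have "4 * x * (sy + y) \<le> 4 * y * (sx + x)" using key by (simp add: algebra_simps)
  then have "4 * x / (sx + x) \<le> 4 * y / (sy + y)" using sxp syp by (simp add: field_simps)
  then show ?thesis using rr_eq[OF x] rr_eq[OF y] unfolding sx_def sy_def by simp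
qed

lemma q_rr: "q m = rr (real m) + (real m)^2 - sqrt 2 * real m"
  unfolding q_def rr_def by (simp add: algebra_simps)

lemma q_conv: "2 * q (m + 1) < q m + q (m + 2)"
proof -
  define x where "x = real m"
  have x: "0 \<le> x" unfolding x_def by simp
  have r0: "0 \<le> rr x" using rr_nonneg[OF x] .
  have r12: "rr (x + 1) \<le> rr (x + 2)" using x by (intro rr_mono) simp_all
  have r1: "rr (x + 1) < 2" using x by (intro rr_less2) simp
  have e1: "q (m + 1) = rr (x + 1) + (x + 1)^2 - sqrt 2 * (x + 1)" using q_rr[of "m+1"] x_def by (simp add: add.commute)
  have e2: "q (m + 2) = rr (x + 2) + (x + 2)^2 - sqrt 2 * (x + 2)" using q_rr[of "m+2"] x_def by (simp add: add.commute)
  have e0: "q m = rr x + x^2 - sqrt 2 * x" using q_rr[of m] x_def by simp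
  have poly: "x^2 + (x + 2)^2 - 2 * (x + 1)^2 = 2" by (simp add: algebra_simps power2_eq_square)
  show ?thesis using e0 e1 e2 poly r0 r12 r1 by (simp add: algebra_simps) 
qed


definition dq :: "nat \<Rightarrow> real" where "dq m = q (Suc m) - q m"
definition gg :: "nat \<Rightarrow> real" where "gg x = q (x + 2) - q 2"
definition BB :: "real \<Rightarrow> nat \<Rightarrow> real" where "BB D L = real L * (cc D - 2 * sqrt 2) + gg L"

lemma dq_step: "dq m < dq (Suc m)"
  using q_conv[of m] unfolding dq_def by (simp add: algebra_simps)

lemma dq_less: "m < m' \<Longrightarrow> dq m < dq m'"
  by (rule lift_Suc_mono_less[of dq]) (use dq_step in auto)

lemma dq_le: "m \<le> m' \<Longrightarrow> dq m \<le> dq m'"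
  using dq_less[of m m'] by (cases "m = m'") auto

lemma q2: "q 2 = 2 * sqrt 2"
  unfolding q_def using sqrt8 by simp

lemma q3: "q 3 = 3 * (sqrt 13 - sqrt 2)"
  unfolding q_def by simp

lemma dq2: "(3/2) * sqrt 2 < dq 2"
proof -
  have a: "36/10 < sqrt 13" by (rule real_less_rsqrt) (simp add: power2_eq_square)
  have "sqrt 2 < sqrt ((1415/1000)^2)" by (rule real_sqrt_less_mono) (simp add: power2_eq_square)
  then have b: "sqrt 2 < 1415/1000" by simp
  have "dq 2 = 3 * (sqrt 13 - sqrt 2) - 2 * sqrt 2" unfolding dq_def using q2 q3
    by (simp add: numeral_3_eq_3 numeral_2_eq_2)
  then show ?thesis using a b by simp
qed

lemma cc_bound: "2 \<le> D \<Longrightarrow> - (3/2) * sqrt 2 < cc D - 2 * sqrt 2"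
proof -
  assume D2: "2 \<le> D"
  have "2 * 2 \<le> D * D" using D2 by (intro mult_mono) simp_all
  then have "4 \<le> D^2" by (simp add: power2_eq_square)
  then have "2 * sqrt (D^2 + 4) < 2 * sqrt (D^2 + 1) + sqrt 2" by (rule diff_small)
  then show ?thesis unfolding cc_def by simp
qed

lemma dq_pos: "2 \<le> m \<Longrightarrow> 0 < dq m"
  using dq_le[of 2 m] dq2 real_sqrt_ge_zero[of 2] by linarith

lemma q_tele: "q (k + a) - q k = (\<Sum>i<a. dq (k + i))"
  by (induction a) (simp_all add: dq_def)

lemma gg_tele: "gg a = (\<Sum>i<a. dq (2 + i))"
  unfolding gg_def using q_tele[of 2 a] by (metis add.commute)

lemma gg_0: "gg 0 = 0" unfolding gg_def by (simp only: add_0 diff_self)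

lemma gg_super_diff: "gg (a + b) - gg b = (\<Sum>i<a. dq (2 + b + i))"
  unfolding gg_def using q_tele[of "2 + b" a] by (simp add: algebra_simps)

lemma gg_super: "gg a + gg b \<le> gg (a + b)"
proof -
  have "(\<Sum>i<a. dq (2 + i)) \<le> (\<Sum>i<a. dq (2 + b + i))"
    by (intro sum_mono dq_le) simp
  then show ?thesis using gg_tele[of a] gg_super_diff[of a b] by simp
qed

lemma gg_super_strict: "1 \<le> a \<Longrightarrow> 1 \<le> b \<Longrightarrow> gg a + gg b < gg (a + b)"
proof -
  assume a: "1 \<le> a" and b: "1 \<le> b"
  have "(\<Sum>i<a. dq (2 + i)) < (\<Sum>i<a. dq (2 + b + i))"
  proof (rule sum_strict_mono)
    show "finite {..<a}" by simp
    have "0 \<in> {..<a}" using a by simp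
    then show "{..<a} \<noteq> {}" by blast
    fix i assume "i \<in> {..<a}"
    show "dq (2 + i) < dq (2 + b + i)" using b by (intro dq_less) simp
  qed
  then show ?thesis using gg_tele[of a] gg_super_diff[of a b] by simp
qed

lemma gg_Suc: "gg (Suc a) - gg a = dq (a + 2)"
  unfolding gg_def dq_def by simp

lemma gg_less: assumes "a < b" shows "gg a < gg b"
proof (rule lift_Suc_mono_less[of gg, OF _ assms])
  fix n show "gg n < gg (Suc n)" using gg_Suc[of n] dq_pos[of "n+2"] by simp
qed

lemma gg_le: "a \<le> b \<Longrightarrow> gg a \<le> gg b"
  using gg_less[of a b] by (cases "a = b") auto

lemma gg_sum:
  assumes "finite N"
  shows "(\<Sum>v\<in>N. gg (x v)) \<le> gg (\<Sum>v\<in>N. x v)"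
  using assms
proof (induction N rule: finite_induct)
  case empty
  then show ?case by (simp add: gg_0)
next
  case (insert w F)
  have "(\<Sum>v\<in>insert w F. gg (x v)) = gg (x w) + (\<Sum>v\<in>F. gg (x v))" using insert by simp
  also have "\<dots> \<le> gg (x w) + gg (\<Sum>v\<in>F. x v)" using insert by simp
  also have "\<dots> \<le> gg (x w + (\<Sum>v\<in>F. x v))" by (rule gg_super)
  also have "\<dots> = gg (\<Sum>v\<in>insert w F. x v)" using insert by simp
  finally show ?case .
qed

lemma gg_sum_strict:
  assumes fin: "finite N" and v: "v \<in> N" and w: "w \<in> N" and vw: "v \<noteq> w"
    and xv: "1 \<le> x v" and xw: "1 \<le> x w"
  shows "(\<Sum>u\<in>N. gg (x u)) < gg (\<Sum>u\<in>N. x u)"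
proof -
  define R where "R = N - {v, w}"
  have finR: "finite R" using fin R_def by simp
  have split: "\<And>f :: _ \<Rightarrow> 'b::comm_monoid_add. sum f N = f v + f w + sum f R"
  proof -
    fix f :: "_ \<Rightarrow> 'b::comm_monoid_add"
    have "sum f N = f v + sum f (N - {v})" using fin v by (rule sum.remove)
    also have "sum f (N - {v}) = f w + sum f (N - {v} - {w})" using fin w vw
      by (intro sum.remove) auto
    also have "N - {v} - {w} = R" unfolding R_def by auto
    finally show "sum f N = f v + f w + sum f R" by (simp add: add.assoc)
  qed
  have "(\<Sum>u\<in>N. gg (x u)) = gg (x v) + gg (x w) + (\<Sum>u\<in>R. gg (x u))" by (rule split)
  also have "\<dots> \<le> gg (x v) + gg (x w) + gg (\<Sum>u\<in>R. x u)" using gg_sum[OF finR] by simp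
  also have "\<dots> \<le> gg (x v) + gg (x w + (\<Sum>u\<in>R. x u))" using gg_super[of "x w"] by simp
  also have "\<dots> < gg (x v + (x w + (\<Sum>u\<in>R. x u)))" using xv xw by (intro gg_super_strict) simp_all
  also have "x v + (x w + (\<Sum>u\<in>R. x u)) = (\<Sum>u\<in>N. x u)" using split[of x] by simp
  finally show ?thesis .
qed

lemma BB_less:
  assumes "2 \<le> D" "L < L'"
  shows "BB D L < BB D L'"
proof (rule lift_Suc_mono_less[of "BB D", OF _ assms(2)])
  fix n
  have "BB D (Suc n) - BB D n = (cc D - 2 * sqrt 2) + dq (n + 2)"
    unfolding BB_def using gg_Suc[of n] by (simp add: algebra_simps)
  moreover have "dq 2 \<le> dq (n + 2)" by (rule dq_le) simp
  ultimately show "BB D n < BB D (Suc n)" using cc_bound[OF assms(1)] dq2 by simp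
qed

lemma BB_le: "2 \<le> D \<Longrightarrow> L \<le> L' \<Longrightarrow> BB D L \<le> BB D L'"
  using BB_less[of D L L'] by (cases "L = L'") auto


lemma T_eq:
  assumes gn: "g \<le> n"
  shows "real n * q 2 + BB (real n - real g + 2) (n - g) =
     2 * sqrt ((real n - real g + 2)\<^sup>2 + 4)
                     + (real n - real g) * sqrt ((real n - real g + 2)\<^sup>2 + 1)
                     + 2 * sqrt 2 * (real g - 2)"
proof -
  define R where "R = real n - real g"
  have rk: "real (n - g) = R" unfolding R_def using gn by simp
  have rk2: "real (n - g + 2) = R + 2" using rk by simp
  have gg: "gg (n - g) = (R + 2) * (sqrt ((R + 2)^2 + 4) - sqrt 2) - 2 * sqrt 2"
    unfolding gg_def q_def using rk2 q2[unfolded q_def] by (simp add: add.commute)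
  have "real n * q 2 + BB (R + 2) (n - g) =
      real n * (2 * sqrt 2) + R * (sqrt ((R+2)^2 + 1) - sqrt ((R+2)^2 + 4) + sqrt 2 - 2 * sqrt 2)
      + ((R + 2) * (sqrt ((R + 2)^2 + 4) - sqrt 2) - 2 * sqrt 2)"
    unfolding BB_def cc_def q2 rk gg by (simp only: add.assoc)
  also have "\<dots> = 2 * sqrt ((R + 2)\<^sup>2 + 4) + R * sqrt ((R + 2)\<^sup>2 + 1)
      + 2 * sqrt 2 * (real n - R - 2)"
    by (simp add: algebra_simps)
  finally show ?thesis unfolding R_def by simp
qed

lemma sum_eq_termwise:
  fixes f g :: "'a \<Rightarrow> real"
  assumes "finite A" "\<forall>x\<in>A. f x \<le> g x" "sum f A = sum g A" "x \<in> A"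
  shows "f x = g x"
proof (rule ccontr)
  assume "f x \<noteq> g x"
  then have "f x < g x" using assms by force
  then have "sum f A < sum g A" using assms by (intro sum_strict_mono_ex1) auto
  then show False using assms by simp
qed


lemma or_cong: "(A \<longleftrightarrow> C) \<Longrightarrow> (B \<longleftrightarrow> D) \<Longrightarrow> (A \<or> B) \<longleftrightarrow> (C \<or> D)"
  by blast

lemma iso_edges:
  fixes ws :: "'a list" and phi :: "nat \<Rightarrow> 'a"
  assumes dist: "distinct ws" and lw: "length ws = g" and g3: "3 \<le> g" and gn: "g \<le> n"
    and phin: "\<And>i. i < g \<Longrightarrow> phi i = ws ! i"
    and phil: "\<And>i. g \<le> i \<Longrightarrow> i < n \<Longrightarrow> phi i \<in> Lf"
    and disj: "Lf \<inter> set ws = {}"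
    and E: "E = cycle_edges ws \<union> (\<lambda>l. {ws ! 0, l}) ` Lf"
    and i: "i < n" and i': "i' < n"
  shows "{phi i, phi i'} \<in> E \<longleftrightarrow> {i, i'} \<in> U_edges n g"
proof -
  have nth: "\<And>a b. a < g \<Longrightarrow> b < g \<Longrightarrow> ws!a = ws!b \<longleftrightarrow> a = b"
    using dist lw nth_eq_iff_index_eq by blast
  have g0: "0 < g" using g3 by simp
  have ce: "cycle_edges ws = {{ws!p, ws!((p+1) mod g)} | p. p < g}"
    unfolding cycle_edges_def lw ..
  have U: "U_edges n g = {{p, (p+1) mod g} | p. p < g} \<union> {{0, j} | j. g \<le> j \<and> j < n}"
    unfolding U_edges_def ..
  have ws_in: "\<And>a. a < g \<Longrightarrow> ws ! a \<in> set ws" using lw by simp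
  have Lnot: "\<And>x. x \<in> Lf \<Longrightarrow> x \<notin> set ws" using disj by blast
  have cyc_sub: "\<And>e. e \<in> cycle_edges ws \<Longrightarrow> e \<subseteq> set ws"
  proof -
    fix e assume "e \<in> cycle_edges ws"
    then obtain p where p: "p < g" "e = {ws!p, ws!((p+1) mod g)}" using ce by blast
    have "(p+1) mod g < g" using g0 by simp
    then show "e \<subseteq> set ws" using p ws_in by auto
  qed
  have Ucyc_lt: "\<And>p a b. p < g \<Longrightarrow> {a, b} = {p, (p+1) mod g} \<Longrightarrow> a < g \<and> b < g"
  proof -
    fix p a b assume p: "p < g" and e: "{a, b} = {p, (p+1) mod g}"
    have "(p+1) mod g < g" using g0 by simp
    have "(a = p \<and> b = (p+1) mod g) \<or> (a = (p+1) mod g \<and> b = p)" using e unfolding doubleton_eq_iff .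
    then show "a < g \<and> b < g" using p \<open>(p+1) mod g < g\<close> by auto
  qed
  show ?thesis
  proof (cases "i < g")
    case True
    note ig = True
    show ?thesis
    proof (cases "i' < g")
      case True
      note i'g = True
      have l1: "{phi i, phi i'} \<notin> (\<lambda>l. {ws ! 0, l}) ` Lf"
      proof
        assume "{phi i, phi i'} \<in> (\<lambda>l. {ws ! 0, l}) ` Lf"
        then obtain l where l: "l \<in> Lf" "{phi i, phi i'} = {ws ! 0, l}" by blast
        have "l \<in> {phi i, phi i'}" using l(2) by (metis insertI1 insertI2)
        then have "l = ws!i \<or> l = ws!i'" using phin[OF ig] phin[OF i'g] by simp
        then show False using l(1) Lnot ws_in[OF ig] ws_in[OF i'g] by blast
      qed
      have r1: "{i, i'} \<notin> {{0, j} | j. g \<le> j \<and> j < n}"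
      proof
        assume "{i, i'} \<in> {{0, j} | j. g \<le> j \<and> j < n}"
        then obtain j where "g \<le> j" "{i, i'} = {0, j}" by blast
        have "(i = 0 \<and> i' = j) \<or> (i = j \<and> i' = 0)" using \<open>{i, i'} = {0, j}\<close> unfolding doubleton_eq_iff .
        then show False using ig i'g \<open>g \<le> j\<close> by auto
      qed
      have "{phi i, phi i'} \<in> cycle_edges ws \<longleftrightarrow> {i, i'} \<in> {{p, (p+1) mod g} | p. p < g}"
      proof -
        have H: "\<And>p. p < g \<Longrightarrow> {ws!i, ws!i'} = {ws!p, ws!((p+1) mod g)} \<longleftrightarrow> {i, i'} = {p, (p+1) mod g}"
        proof -
          fix p assume p: "p < g"
          have sp: "(p+1) mod g < g" using g0 by simp
          show "{ws!i, ws!i'} = {ws!p, ws!((p+1) mod g)} \<longleftrightarrow> {i, i'} = {p, (p+1) mod g}"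
            unfolding doubleton_eq_iff using nth[OF ig p] nth[OF ig sp] nth[OF i'g p] nth[OF i'g sp] by blast
        qed
        have pi: "phi i = ws!i" "phi i' = ws!i'" using phin ig i'g by simp_all
        show ?thesis unfolding ce pi
        proof
          assume "{ws ! i, ws ! i'} \<in> {{ws ! p, ws ! ((p + 1) mod g)} |p. p < g}"
          then obtain p where "p < g" "{ws ! i, ws ! i'} = {ws ! p, ws ! ((p + 1) mod g)}" by blast
          then show "{i, i'} \<in> {{p, (p + 1) mod g} |p. p < g}" using H by blast
        next
          assume "{i, i'} \<in> {{p, (p + 1) mod g} |p. p < g}"
          then obtain p where "p < g" "{i, i'} = {p, (p + 1) mod g}" by blast
          then show "{ws ! i, ws ! i'} \<in> {{ws ! p, ws ! ((p + 1) mod g)} |p. p < g}" using H by blast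
        qed
      qed
      then show ?thesis unfolding E U Un_iff
        by (rule or_cong) (use l1 r1 in blast)
    next
      case False
      note i'g = False
      have pl: "phi i' \<in> Lf" using phil i' i'g by simp
      have l1: "{phi i, phi i'} \<notin> cycle_edges ws"
      proof
        assume "{phi i, phi i'} \<in> cycle_edges ws"
        then have "{phi i, phi i'} \<subseteq> set ws" by (rule cyc_sub)
        then have "phi i' \<in> set ws" "phi i \<in> set ws" by simp_all
        then show False using Lnot[OF pl] by simp
      qed
      have r1: "{i, i'} \<notin> {{p, (p+1) mod g} | p. p < g}"
        using Ucyc_lt i'g by blast
      have m1: "{phi i, phi i'} \<in> (\<lambda>l. {ws ! 0, l}) ` Lf \<longleftrightarrow> i = 0"
      proof
        assume "{phi i, phi i'} \<in> (\<lambda>l. {ws ! 0, l}) ` Lf"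
        then obtain l where l: "l \<in> Lf" "{phi i, phi i'} = {ws ! 0, l}" by blast
        have "ws ! 0 \<noteq> phi i'" using ws_in[OF g0] Lnot[OF pl] by auto
        have "(phi i = ws ! 0 \<and> phi i' = l) \<or> (phi i = l \<and> phi i' = ws ! 0)" using l(2) unfolding doubleton_eq_iff .
        then have "ws ! 0 = phi i" using \<open>ws ! 0 \<noteq> phi i'\<close> by auto
        then show "i = 0" using phin ig nth g0 by simp
      next
        assume "i = 0"
        then show "{phi i, phi i'} \<in> (\<lambda>l. {ws ! 0, l}) ` Lf" using pl phin g0 by auto
      qed
      have m2: "{i, i'} \<in> {{0, j} | j. g \<le> j \<and> j < n} \<longleftrightarrow> i = 0"
      proof
        assume "{i, i'} \<in> {{0, j} | j. g \<le> j \<and> j < n}"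
        then obtain j where "g \<le> j" "{i, i'} = {0, j}" by blast
        have "(i = 0 \<and> i' = j) \<or> (i = j \<and> i' = 0)" using \<open>{i, i'} = {0, j}\<close> unfolding doubleton_eq_iff .
        then show "i = 0" using ig \<open>g \<le> j\<close> by auto
      next
        assume "i = 0"
        then show "{i, i'} \<in> {{0, j} | j. g \<le> j \<and> j < n}" using i' i'g by auto
      qed
      show ?thesis unfolding E U Un_iff
      proof (rule or_cong)
        show "({phi i, phi i'} \<in> cycle_edges ws) = ({i, i'} \<in> {{p, (p + 1) mod g} |p. p < g})"
          using l1 r1 by blast
        show "({phi i, phi i'} \<in> (\<lambda>l. {ws ! 0, l}) ` Lf) = ({i, i'} \<in> {{0, j} |j. g \<le> j \<and> j < n})"
          unfolding m1 m2 by (rule refl)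
      qed
    qed
  next
    case False
    note ig = False
    have pl: "phi i \<in> Lf" using phil i ig by simp
    show ?thesis
    proof (cases "i' < g")
      case True
      note i'g = True
      have l1: "{phi i, phi i'} \<notin> cycle_edges ws"
      proof
        assume "{phi i, phi i'} \<in> cycle_edges ws"
        then have "{phi i, phi i'} \<subseteq> set ws" by (rule cyc_sub)
        then have "phi i' \<in> set ws" "phi i \<in> set ws" by simp_all
        then show False using Lnot[OF pl] by simp
      qed
      have r1: "{i, i'} \<notin> {{p, (p+1) mod g} | p. p < g}"
        using Ucyc_lt ig by blast
      have m1: "{phi i, phi i'} \<in> (\<lambda>l. {ws ! 0, l}) ` Lf \<longleftrightarrow> i' = 0"
      proof
        assume "{phi i, phi i'} \<in> (\<lambda>l. {ws ! 0, l}) ` Lf"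
        then obtain l where l: "l \<in> Lf" "{phi i, phi i'} = {ws ! 0, l}" by blast
        have "ws ! 0 \<noteq> phi i" using ws_in[OF g0] Lnot[OF pl] by auto
        have "(phi i = ws ! 0 \<and> phi i' = l) \<or> (phi i = l \<and> phi i' = ws ! 0)" using l(2) unfolding doubleton_eq_iff .
        then have "ws ! 0 = phi i'" using \<open>ws ! 0 \<noteq> phi i\<close> by auto
        then show "i' = 0" using phin i'g nth g0 by simp
      next
        assume "i' = 0"
        then have "{phi i, phi i'} = {ws ! 0, phi i}" using phin g0 by auto
        then show "{phi i, phi i'} \<in> (\<lambda>l. {ws ! 0, l}) ` Lf" using pl by auto
      qed
      have m2: "{i, i'} \<in> {{0, j} | j. g \<le> j \<and> j < n} \<longleftrightarrow> i' = 0"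
      proof
        assume "{i, i'} \<in> {{0, j} | j. g \<le> j \<and> j < n}"
        then obtain j where "g \<le> j" "{i, i'} = {0, j}" by blast
        have "(i = 0 \<and> i' = j) \<or> (i = j \<and> i' = 0)" using \<open>{i, i'} = {0, j}\<close> unfolding doubleton_eq_iff .
        then show "i' = 0" using i'g \<open>g \<le> j\<close> by auto
      next
        assume "i' = 0"
        then have "{i, i'} = {0, i}" by (simp add: insert_commute)
        moreover have "g \<le> i" "i < n" using i ig by simp_all
        ultimately show "{i, i'} \<in> {{0, j} | j. g \<le> j \<and> j < n}" by blast
      qed
      show ?thesis unfolding E U Un_iff
      proof (rule or_cong)
        show "({phi i, phi i'} \<in> cycle_edges ws) = ({i, i'} \<in> {{p, (p + 1) mod g} |p. p < g})"
          using l1 r1 by blast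
        show "({phi i, phi i'} \<in> (\<lambda>l. {ws ! 0, l}) ` Lf) = ({i, i'} \<in> {{0, j} |j. g \<le> j \<and> j < n})"
          unfolding m1 m2 by (rule refl)
      qed
    next
      case False
      note i'g = False
      have pl': "phi i' \<in> Lf" using phil i' i'g by simp
      have l1: "{phi i, phi i'} \<notin> cycle_edges ws"
      proof
        assume "{phi i, phi i'} \<in> cycle_edges ws"
        then have "{phi i, phi i'} \<subseteq> set ws" by (rule cyc_sub)
        then have "phi i' \<in> set ws" "phi i \<in> set ws" by simp_all
        then show False using Lnot[OF pl] by simp
      qed
      have l2: "{phi i, phi i'} \<notin> (\<lambda>l. {ws ! 0, l}) ` Lf"
      proof
        assume "{phi i, phi i'} \<in> (\<lambda>l. {ws ! 0, l}) ` Lf"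
        then obtain l where l: "{phi i, phi i'} = {ws ! 0, l}" by blast
        then have "ws ! 0 \<in> {phi i, phi i'}" by auto
        then show False using ws_in[OF g0] Lnot[OF pl] Lnot[OF pl'] by auto
      qed
      have r1: "{i, i'} \<notin> {{p, (p+1) mod g} | p. p < g}"
        using Ucyc_lt ig by blast
      have r2: "{i, i'} \<notin> {{0, j} | j. g \<le> j \<and> j < n}"
      proof
        assume "{i, i'} \<in> {{0, j} | j. g \<le> j \<and> j < n}"
        then obtain j where "{i, i'} = {0, j}" by blast
        then have "0 \<in> {i, i'}" by auto
        then show False using ig i'g g0 by auto
      qed
      show ?thesis unfolding E U Un_iff
      proof (rule or_cong)
        show "({phi i, phi i'} \<in> cycle_edges ws) = ({i, i'} \<in> {{p, (p + 1) mod g} |p. p < g})"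
          using l1 r1 by blast
        show "({phi i, phi i'} \<in> (\<lambda>l. {ws ! 0, l}) ` Lf) = ({i, i'} \<in> {{0, j} |j. g \<le> j \<and> j < n})"
          using l2 r2 by blast
      qed
    qed
  qed
qed


lemma struct_iso:
  assumes cyc: "is_cycle V E vs" and len: "length vs = g" and finV: "finite V"
    and cardV: "card V = n" and h: "h \<in> set vs"
    and E: "E = cycle_edges vs \<union> (\<lambda>l. {h, l}) ` (V - set vs)"
  shows "graph_iso V E (U_vertices n) (U_edges n g)"
proof -
  have dist: "distinct vs" and g3: "3 \<le> g" and sV: "set vs \<subseteq> V"
    using cyc len unfolding is_cycle_def by auto
  have gn: "g \<le> n"
  proof -
    have "card (set vs) = g" using dist len distinct_card by blast
    moreover have "card (set vs) \<le> card V" using sV finV card_mono by blast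
    ultimately show ?thesis using cardV by simp
  qed
  obtain j where jg: "j < g" and vj: "vs ! j = h" using h len by (metis in_set_conv_nth)
  define ws where "ws = rotate j vs"
  have ws_cyc: "cycle_edges ws = cycle_edges vs" unfolding ws_def using rotate_is_cycle(2)[OF cyc] .
  have lw: "length ws = g" unfolding ws_def using len by simp
  have distw: "distinct ws" unfolding ws_def using dist by simp
  have setw: "set ws = set vs" unfolding ws_def by simp
  have w0: "ws ! 0 = h"
  proof -
    have "0 < length vs" using len g3 by simp
    then have "ws ! 0 = vs ! ((j + 0) mod length vs)" unfolding ws_def by (rule nth_rotate)
    then show ?thesis using jg len vj by simp
  qed
  define Lf where "Lf = V - set ws"
  have E': "E = cycle_edges ws \<union> (\<lambda>l. {ws ! 0, l}) ` Lf"
    unfolding E ws_cyc w0 Lf_def setw ..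
  have disj: "Lf \<inter> set ws = {}" unfolding Lf_def by blast
  have cL: "card Lf = n - g"
  proof -
    have "card Lf = card V - card (set ws)" unfolding Lf_def using finV sV setw by (simp add: card_Diff_subset)
    moreover have "card (set ws) = g" using distw lw distinct_card by blast
    ultimately show ?thesis using cardV by simp
  qed
  have finL: "finite Lf" unfolding Lf_def using finV by simp
  obtain sig where sig: "bij_betw sig {g..<n} Lf"
    using finite_same_card_bij[of "{g..<n}" Lf] finL cL by auto
  define phi where "phi i = (if i < g then ws ! i else sig i)" for i
  have phin: "\<And>i. i < g \<Longrightarrow> phi i = ws ! i" unfolding phi_def by simp
  have phil: "\<And>i. g \<le> i \<Longrightarrow> i < n \<Longrightarrow> phi i \<in> Lf"
  proof -
    fix i assume "g \<le> i" "i < n"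
    then have "sig i \<in> Lf" using sig unfolding bij_betw_def by auto
    then show "phi i \<in> Lf" unfolding phi_def using \<open>g \<le> i\<close> by simp
  qed
  have b1: "bij_betw phi {..<g} (set ws)"
  proof -
    have "bij_betw ((!) ws) {..<g} (set ws)" using bij_betw_nth[OF distw] lw by simp
    then show ?thesis using bij_betw_cong[of "{..<g}" phi "(!) ws" "set ws"] phin by simp
  qed
  have b2: "bij_betw phi {g..<n} Lf"
    using bij_betw_cong[of "{g..<n}" phi sig Lf] sig unfolding phi_def by simp
  have b: "bij_betw phi ({..<g} \<union> {g..<n}) (set ws \<union> Lf)"
    by (rule bij_betw_combine[OF b1 b2]) (use disj in blast)
  have u1: "{..<g} \<union> {g..<n} = {0..<n}" using gn by auto
  have u2: "set ws \<union> Lf = V" unfolding Lf_def using sV setw by blast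
  have bphi: "bij_betw phi {0..<n} V" using b unfolding u1 u2 .
  define f where "f = the_inv_into {0..<n} phi"
  have bf: "bij_betw f V {0..<n}" unfolding f_def by (rule bij_betw_the_inv_into[OF bphi])
  have fin: "\<And>u. u \<in> V \<Longrightarrow> f u < n" using bf unfolding bij_betw_def by auto
  have phif: "\<And>u. u \<in> V \<Longrightarrow> phi (f u) = u"
    unfolding f_def using f_the_inv_into_f_bij_betw[OF bphi] by simp
  show ?thesis unfolding graph_iso_def
  proof (intro exI conjI ballI)
    show "bij_betw f V (U_vertices n)" using bf unfolding U_vertices_def .
    fix u v assume u: "u \<in> V" and v: "v \<in> V"
    have "{u, v} \<in> E \<longleftrightarrow> {phi (f u), phi (f v)} \<in> E" using phif u v by simp
    also have "\<dots> \<longleftrightarrow> {f u, f v} \<in> U_edges n g"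
      by (rule iso_edges[OF distw lw g3 gn phin phil disj E' fin[OF u] fin[OF v]])
    finally show "{u, v} \<in> E \<longleftrightarrow> {f u, f v} \<in> U_edges n g" .
  next
    fix e assume "e \<in> E"
    then show "e \<subseteq> V" unfolding E using cycle_edges_subset sV h by blast
  qed
qed


lemma sombor_iso:
  assumes iso: "graph_iso V E W F" and sgE: "simple_graph V E"
    and Fs: "\<forall>e\<in>F. e \<subseteq> W \<and> card e = 2"
  shows "sombor E = sombor F"
proof -
  obtain f where bij: "bij_betw f V W" and ed: "\<forall>u\<in>V. \<forall>v\<in>V. {u, v} \<in> E \<longleftrightarrow> {f u, f v} \<in> F"
    using iso unfolding graph_iso_def by blast
  have inj: "inj_on f V" using bij unfolding bij_betw_def by simp
  have fV: "f ` V = W" using bij unfolding bij_betw_def by simp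
  have Es: "\<forall>e\<in>E. e \<subseteq> V \<and> card e = 2" using sgE unfolding simple_graph_def by simp
  have img: "(`) f ` E = F"
  proof
    show "(`) f ` E \<subseteq> F"
    proof
      fix e' assume "e' \<in> (`) f ` E"
      then obtain e where e: "e \<in> E" "e' = f ` e" by blast
      then obtain a b where ab: "e = {a, b}" using Es by (meson card_2_iff)
      have "a \<in> V" "b \<in> V" using Es e ab by auto
      then have "{f a, f b} \<in> F" using ed e ab by blast
      then show "e' \<in> F" using e ab by simp
    qed
    show "F \<subseteq> (`) f ` E"
    proof
      fix e' assume e': "e' \<in> F"
      then obtain x y where xy: "e' = {x, y}" using Fs by (meson card_2_iff)
      have "x \<in> W" "y \<in> W" using Fs e' xy by auto
      then obtain a b where a: "a \<in> V" "x = f a" and b: "b \<in> V" "y = f b" using fV by blast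
      then have "{a, b} \<in> E" using ed e' xy by blast
      moreover have "e' = f ` {a, b}" using xy a b by simp
      ultimately show "e' \<in> (`) f ` E" by blast
    qed
  qed
  have injE: "inj_on ((`) f) E"
  proof (rule inj_onI)
    fix a b assume "a \<in> E" "b \<in> E" "f ` a = f ` b"
    then show "a = b" using inj_on_image_eq_iff[OF inj] Es by blast
  qed
  have deg: "degree F (f v) = degree E v" if v: "v \<in> V" for v
  proof -
    have "{e' \<in> F. f v \<in> e'} = (`) f ` {e \<in> E. v \<in> e}"
    proof
      show "{e' \<in> F. f v \<in> e'} \<subseteq> (`) f ` {e \<in> E. v \<in> e}"
      proof
        fix e' assume "e' \<in> {e' \<in> F. f v \<in> e'}"
        then have e': "e' \<in> F" "f v \<in> e'" by auto
        then obtain e where e: "e \<in> E" "e' = f ` e" using img by blast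
        then have "v \<in> e" using e' inj_on_image_mem_iff[OF inj v] Es by blast
        then show "e' \<in> (`) f ` {e \<in> E. v \<in> e}" using e by blast
      qed
      show "(`) f ` {e \<in> E. v \<in> e} \<subseteq> {e' \<in> F. f v \<in> e'}" using img by blast
    qed
    moreover have "card ((`) f ` {e \<in> E. v \<in> e}) = card {e \<in> E. v \<in> e}"
      by (rule card_image) (rule inj_on_subset[OF injE], blast)
    ultimately show ?thesis unfolding degree_def by simp
  qed
  have "sombor F = (\<Sum>e'\<in>(`) f ` E. sqrt (\<Sum>x\<in>e'. (real (degree F x))\<^sup>2))"
    unfolding sombor_def img ..
  also have "\<dots> = (\<Sum>e\<in>E. sqrt (\<Sum>x\<in>f ` e. (real (degree F x))\<^sup>2))"
    by (rule sum.reindex[OF injE, unfolded comp_def])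
  also have "\<dots> = (\<Sum>e\<in>E. sqrt (\<Sum>a\<in>e. (real (degree E a))\<^sup>2))"
  proof (rule sum.cong[OF refl])
    fix e assume e: "e \<in> E"
    have ie: "inj_on f e" using inj_on_subset[OF inj] Es e by blast
    have "(\<Sum>x\<in>f ` e. (real (degree F x))\<^sup>2) = (\<Sum>a\<in>e. (real (degree F (f a)))\<^sup>2)"
      by (rule sum.reindex[OF ie, unfolded comp_def])
    also have "\<dots> = (\<Sum>a\<in>e. (real (degree E a))\<^sup>2)"
      using deg Es e by (intro sum.cong) auto
    finally show "sqrt (\<Sum>x\<in>f ` e. (real (degree F x))\<^sup>2) = sqrt (\<Sum>a\<in>e. (real (degree E a))\<^sup>2)" by simp
  qed
  also have "\<dots> = sombor E" unfolding sombor_def ..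
  finally show ?thesis ..
qed


lemma sqrt8_loc: "sqrt 8 = 2 * sqrt 2"
proof -
  have "sqrt 8 = sqrt (4 * 2)" by simp
  also have "\<dots> = sqrt 4 * sqrt 2" by (rule real_sqrt_mult)
  also have "sqrt 4 = (2::real)" by (simp add: real_sqrt_unique)
  finally show ?thesis by simp
qed

lemma U_split: "U_edges n g = (\<lambda>i. {i, (i+1) mod g}) ` {..<g} \<union> (\<lambda>j. {0, j}) ` {g..<n}"
proof -
  have a: "{{i, (i+1) mod g} | i. i < (g::nat)} = (\<lambda>i. {i, (i+1) mod g}) ` {..<g}"
    by (auto simp: image_def)
  have b: "{{0::nat, j} | j. g \<le> j \<and> j < n} = (\<lambda>j. {0, j}) ` {g..<n}"
    by (auto simp: image_def)
  show ?thesis unfolding U_edges_def a b ..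
qed

lemma sombor_U:
  assumes g3: "3 \<le> g" and gn: "g \<le> n"
  shows "sombor (U_edges n g) = 2 * sqrt ((real n - real g + 2)\<^sup>2 + 4)
                     + (real n - real g) * sqrt ((real n - real g + 2)\<^sup>2 + 1)
                     + 2 * sqrt 2 * (real g - 2)"
proof -
  define UA where "UA = (\<lambda>i. {i, (i+1) mod g}) ` {..<g}"
  define UP where "UP = (\<lambda>j. {0::nat, j}) ` {g..<n}"
  define U where "U = U_edges n g"
  have U: "U = UA \<union> UP" unfolding U_def UA_def UP_def by (rule U_split)
  have g0: "0 < g" using g3 by simp
  have smod: "\<And>i. i < g \<Longrightarrow> (i+1) mod g = (if i+1 = g then 0 else i+1)" by (rule suc_mod)
  have UAlt: "\<And>e x. e \<in> UA \<Longrightarrow> x \<in> e \<Longrightarrow> x < g"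
  proof -
    fix e x assume "e \<in> UA" "x \<in> e"
    then obtain i where i: "i < g" "e = {i, (i+1) mod g}" unfolding UA_def by blast
    have "(i+1) mod g < g" using g0 by simp
    then show "x < g" using i \<open>x \<in> e\<close> by auto
  qed
  have UPform: "\<And>e. e \<in> UP \<Longrightarrow> \<exists>j. g \<le> j \<and> j < n \<and> e = {0, j}" unfolding UP_def by auto
  have disj: "UA \<inter> UP = {}"
  proof -
    { fix e assume "e \<in> UA" "e \<in> UP"
      then obtain j where "g \<le> j" "e = {0, j}" using UPform by blast
      then have False using UAlt[OF \<open>e \<in> UA\<close>, of j] by simp }
    then show ?thesis by blast
  qed
  have injP: "inj_on (\<lambda>j. {0::nat, j}) {g..<n}"
  proof (rule inj_onI)
    fix a b assume "a \<in> {g..<n}" "b \<in> {g..<n}" "{0::nat, a} = {0, b}"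
    then have "(0 = 0 \<and> a = b) \<or> (0 = b \<and> a = 0)" unfolding doubleton_eq_iff by blast
    then show "a = b" using \<open>a \<in> {g..<n}\<close> g0 by auto
  qed
  have cardP: "card UP = n - g" unfolding UP_def using card_image[OF injP] by simp
  have injA: "inj_on (\<lambda>i. {i, (i+1) mod g}) {..<g}"
  proof -
    have "inj_on (\<lambda>i. {[0..<g]!i, [0..<g]!((i+1) mod length [0..<g])}) {..<length [0..<g]}"
      by (rule cycle_inj) (use g3 in simp_all)
    then have i1: "inj_on (\<lambda>i. {[0..<g]!i, [0..<g]!((i+1) mod g)}) {..<g}" by simp
    have "inj_on (\<lambda>i. {[0..<g]!i, [0..<g]!((i+1) mod g)}) {..<g} = inj_on (\<lambda>i. {i, (i+1) mod g}) {..<g}"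
    proof (rule inj_on_cong)
      fix i assume "i \<in> {..<g}"
      moreover have "(i+1) mod g < g" using g0 by simp
      ultimately show "{[0..<g]!i, [0..<g]!((i+1) mod g)} = {i, (i+1) mod g}" by simp
    qed
    then show ?thesis using i1 by simp
  qed
  define D where "D = n - g + 2"
  define dd where "dd v = (if v = 0 then D else if v < g then 2 else 1)" for v :: nat
  have deg0: "degree U 0 = D"
  proof -
    have "{e \<in> U. 0 \<in> e} = {{0, 1}, {g - 1, 0}} \<union> UP"
    proof
      show "{e \<in> U. 0 \<in> e} \<subseteq> {{0, 1}, {g - 1, 0}} \<union> UP"
      proof
        fix e assume "e \<in> {e \<in> U. 0 \<in> e}"
        then have e: "e \<in> UA \<or> e \<in> UP" "0 \<in> e" unfolding U by auto
        show "e \<in> {{0, 1}, {g - 1, 0}} \<union> UP"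
        proof (cases "e \<in> UP")
          case False
          then obtain i where i: "i < g" "e = {i, (i+1) mod g}" using e unfolding UA_def by blast
          then have "0 = i \<or> 0 = (i+1) mod g" using e(2) by simp
          then show ?thesis
          proof
            assume "0 = i" then have "e = {0, 1}" using i g3 by simp
            then show ?thesis by simp
          next
            assume h0: "0 = (i+1) mod g"
            then have "i + 1 = g" using smod[OF i(1)] by (cases "i+1 = g") simp_all
            then have "i = g - 1" by simp
            then have "e = {g - 1, 0}" using i h0 by simp
            then show ?thesis by simp
          qed
        qed simp
      qed
      show "{{0, 1}, {g - 1, 0}} \<union> UP \<subseteq> {e \<in> U. 0 \<in> e}"
      proof -
        have "{0, 1} \<in> UA" unfolding UA_def using g3
          by (intro image_eqI[of _ _ 0]) simp_all
        moreover have "{g - 1, 0} \<in> UA" unfolding UA_def using g3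
          by (intro image_eqI[of _ _ "g - 1"]) simp_all
        moreover have "\<forall>e\<in>UP. 0 \<in> e" unfolding UP_def by auto
        ultimately show ?thesis unfolding U by (intro subsetI) auto
      qed
    qed
    moreover have "card ({{0, 1}, {g - 1, 0}} \<union> UP) = 2 + (n - g)"
    proof -
      have ne: "{0::nat, 1} \<noteq> {g - 1, 0}" using g3 by (simp add: doubleton_eq_iff)
      have UPbig: "\<And>e. e \<in> UP \<Longrightarrow> \<exists>j\<in>e. g \<le> j"
      proof -
        fix e assume "e \<in> UP"
        then obtain j where "g \<le> j" "e = {0, j}" using UPform by blast
        then show "\<exists>j\<in>e. g \<le> j" by blast
      qed
      have "\<not> (\<exists>j\<in>{0::nat, 1}. g \<le> j)" "\<not> (\<exists>j\<in>{g - 1, 0}. g \<le> j)" using g3 by auto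
      then have "{0::nat, 1} \<notin> UP" "{g - 1, 0} \<notin> UP" using UPbig by blast+
      then have "{{0::nat, 1}, {g - 1, 0}} \<inter> UP = {}" by blast
      moreover have "finite UP" unfolding UP_def by simp
      ultimately have "card ({{0, 1}, {g - 1, 0}} \<union> UP) = card {{0::nat, 1}, {g - 1, 0}} + card UP"
        by (intro card_Un_disjoint) simp_all
      then show ?thesis using ne cardP by simp
    qed
    ultimately show ?thesis unfolding degree_def D_def using gn by simp
  qed
  have degmid: "degree U v = 2" if v: "0 < v" "v < g" for v
  proof -
    have "{e \<in> U. v \<in> e} = {{v - 1, v}, {v, (v+1) mod g}}"
    proof
      show "{e \<in> U. v \<in> e} \<subseteq> {{v - 1, v}, {v, (v+1) mod g}}"
      proof
        fix e assume "e \<in> {e \<in> U. v \<in> e}"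
        then have e: "e \<in> UA \<or> e \<in> UP" "v \<in> e" unfolding U by auto
        have "e \<notin> UP"
        proof
          assume "e \<in> UP"
          then obtain j where "g \<le> j" "e = {0, j}" using UPform by blast
          then show False using e(2) v by auto
        qed
        then obtain i where i: "i < g" "e = {i, (i+1) mod g}" using e unfolding UA_def by blast
        then have "v = i \<or> v = (i+1) mod g" using e(2) by simp
        then show "e \<in> {{v - 1, v}, {v, (v+1) mod g}}"
        proof
          assume "v = i" then show ?thesis using i by simp
        next
          assume hv: "v = (i+1) mod g"
          then have "i + 1 \<noteq> g" using v smod[OF i(1)] by auto
          then have m: "(i+1) mod g = i + 1" using smod[OF i(1)] by simp
          then have "v = i + 1" using hv by simp
          then have "e = {v - 1, v}" using i(2) m by simp
          then show ?thesis by simp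
        qed
      qed
      show "{{v - 1, v}, {v, (v+1) mod g}} \<subseteq> {e \<in> U. v \<in> e}"
      proof -
        have "{v - 1, v} \<in> UA" unfolding UA_def using v
          by (intro image_eqI[of _ _ "v - 1"]) simp_all
        moreover have "{v, (v+1) mod g} \<in> UA" unfolding UA_def using v by simp
        ultimately show ?thesis unfolding U by blast
      qed
    qed
    moreover have "{v - 1, v} \<noteq> {v, (v+1) mod g}"
    proof -
      have "v - 1 \<noteq> (v+1) mod g" using smod[OF v(2)] v g3 by (cases "v+1 = g") simp_all
      moreover have "v - 1 \<noteq> v" using v by simp
      ultimately show ?thesis by (simp add: doubleton_eq_iff)
    qed
    ultimately show ?thesis unfolding degree_def by simp
  qed
  have degleaf: "degree U v = 1" if v: "g \<le> v" "v < n" for v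
  proof -
    have "{e \<in> U. v \<in> e} = {{0, v}}"
    proof
      show "{e \<in> U. v \<in> e} \<subseteq> {{0, v}}"
      proof
        fix e assume "e \<in> {e \<in> U. v \<in> e}"
        then have e: "e \<in> UA \<or> e \<in> UP" "v \<in> e" unfolding U by auto
        have "e \<notin> UA" using UAlt e(2) v by fastforce
        then obtain j where "e = {0, j}" using e UPform by blast
        then show "e \<in> {{0, v}}" using e(2) v g0 by auto
      qed
      show "{{0, v}} \<subseteq> {e \<in> U. v \<in> e}" unfolding U UP_def using v by auto
    qed
    then show ?thesis unfolding degree_def by simp
  qed
  have deg: "degree U v = dd v" if "v < n" for v
    using deg0 degmid degleaf that unfolding dd_def by (cases "v = 0"; cases "v < g") simp_all
  define t where "t e = sqrt (\<Sum>x\<in>e. (real (degree U x))\<^sup>2)" for e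
  have tpair: "t {a, b} = sqrt ((real (dd a))\<^sup>2 + (real (dd b))\<^sup>2)" if "a \<noteq> b" "a < n" "b < n" for a b
    unfolding t_def using that deg by simp
  have sumP: "(\<Sum>e\<in>UP. t e) = real (n - g) * sqrt ((real D)\<^sup>2 + 1)"
  proof -
    have "(\<Sum>e\<in>UP. t e) = (\<Sum>j\<in>{g..<n}. t {0, j})"
      unfolding UP_def by (rule sum.reindex[OF injP, unfolded comp_def])
    also have "\<dots> = (\<Sum>j\<in>{g..<n}. sqrt ((real D)\<^sup>2 + 1))"
    proof (rule sum.cong[OF refl])
      fix j assume j: "j \<in> {g..<n}"
      then have "0 \<noteq> j" "0 < n" "j < n" "\<not> j < g" using g0 by auto
      then show "t {0, j} = sqrt ((real D)\<^sup>2 + 1)" using tpair[of 0 j] unfolding dd_def by simp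
    qed
    finally show ?thesis by simp
  qed
  have sumA: "(\<Sum>e\<in>UA. t e) = 2 * sqrt ((real D)\<^sup>2 + 4) + real (g - 2) * (2 * sqrt 2)"
  proof -
    define s where "s i = t {i, (i+1) mod g}" for i
    have R0: "(\<Sum>e\<in>UA. t e) = (\<Sum>i<g. s i)"
      unfolding UA_def s_def by (rule sum.reindex[OF injA, unfolded comp_def])
    define m where "m = g - 3"
    have gm: "g = Suc (Suc (Suc m))" unfolding m_def using g3 by simp
    have B1: "(\<Sum>i<Suc (Suc (Suc m)). s i) = (\<Sum>i<Suc (Suc m). s i) + s (Suc (Suc m))" by (rule sum.lessThan_Suc)
    have B2: "(\<Sum>i<Suc (Suc m). s i) = s 0 + (\<Sum>i<Suc m. s (Suc i))" by (rule sum.lessThan_Suc_shift)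
    have g1: "g - 1 = Suc (Suc m)" and g2: "g - 2 = Suc m" using gm by simp_all
    have A1: "(\<Sum>e\<in>UA. t e) = s 0 + (\<Sum>i<g - 2. s (Suc i)) + s (g - 1)"
      unfolding g1 g2 R0 using B1 B2 gm by simp
    have A3: "(\<Sum>i<g - 2. s (Suc i)) = (\<Sum>i<g - 2. 2 * sqrt 2)"
    proof (rule sum.cong[OF refl])
      fix i assume "i \<in> {..<g - 2}"
      then have i: "Suc i + 1 < g" by simp
      then have "(Suc i + 1) mod g = Suc i + 1" by simp
      then have "s (Suc i) = t {Suc i, Suc i + 1}" unfolding s_def by simp
      also have "\<dots> = sqrt 8" using tpair[of "Suc i" "Suc i + 1"] i gn unfolding dd_def by simp
      finally show "s (Suc i) = 2 * sqrt 2" using sqrt8_loc by simp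
    qed
    have A4: "s 0 = sqrt ((real D)\<^sup>2 + 4)"
    proof -
      have "(0 + 1) mod g = 1" using g3 by simp
      then have "s 0 = t {0, 1}" unfolding s_def by simp
      also have "\<dots> = sqrt ((real D)\<^sup>2 + 4)" using tpair[of 0 1] g3 gn unfolding dd_def by simp
      finally show ?thesis .
    qed
    have A5: "s (g - 1) = sqrt ((real D)\<^sup>2 + 4)"
    proof -
      have "(g - 1 + 1) mod g = 0" using g3 by simp
      then have "s (g - 1) = t {g - 1, 0}" unfolding s_def by simp
      also have "\<dots> = sqrt ((real D)\<^sup>2 + 4)" using tpair[of "g - 1" 0] g3 gn unfolding dd_def by (simp add: add.commute)
      finally show ?thesis .
    qed
    show ?thesis unfolding A1 A3 A4 A5 by simp
  qed
  have "sombor (U_edges n g) = (\<Sum>e\<in>U. t e)" unfolding sombor_def t_def U_def ..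
  also have "\<dots> = (\<Sum>e\<in>UA. t e) + (\<Sum>e\<in>UP. t e)"
    unfolding U by (rule sum.union_disjoint) (use disj in \<open>simp_all add: UA_def UP_def\<close>)
  also have "\<dots> = 2 * sqrt ((real D)\<^sup>2 + 4) + real (g - 2) * (2 * sqrt 2) + real (n - g) * sqrt ((real D)\<^sup>2 + 1)"
    using sumA sumP by simp
  finally have fin: "sombor (U_edges n g) = 2 * sqrt ((real D)\<^sup>2 + 4) + real (g - 2) * (2 * sqrt 2) + real (n - g) * sqrt ((real D)\<^sup>2 + 1)" .
  have r1: "real D = real n - real g + 2" unfolding D_def using gn by simp
  have r2: "real (g - 2) = real g - 2" using g3 by simp
  have r3: "real (n - g) = real n - real g" using gn by simp
  show ?thesis unfolding fin r1 r2 r3 by (simp add: algebra_simps)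
qed


lemma main_bound:
  fixes V :: "'a set" and E :: "'a set set" and n g :: nat
  assumes uni: "unicyclic V E" and cV: "card V = n" and gir: "girth V E = g"
  shows "sombor E \<le> 2 * sqrt ((real n - real g + 2)\<^sup>2 + 4)
                     + (real n - real g) * sqrt ((real n - real g + 2)\<^sup>2 + 1)
                     + 2 * sqrt 2 * (real g - 2)"
    and "sombor E = 2 * sqrt ((real n - real g + 2)\<^sup>2 + 4)
                     + (real n - real g) * sqrt ((real n - real g + 2)\<^sup>2 + 1)
                     + 2 * sqrt 2 * (real g - 2)
         \<Longrightarrow> \<exists>vs h. is_cycle V E vs \<and> length vs = g \<and> h \<in> set vs \<and>
                E = cycle_edges vs \<union> (\<lambda>l. {h, l}) ` (V - set vs)"
proof -
  define T where "T = 2 * sqrt ((real n - real g + 2)\<^sup>2 + 4)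
                     + (real n - real g) * sqrt ((real n - real g + 2)\<^sup>2 + 1)
                     + 2 * sqrt 2 * (real g - 2)"
  have sg: "simple_graph V E" and conn: "connected_graph V E" using uni unfolding unicyclic_def by auto
  have finV: "finite V" using sg unfolding simple_graph_def by simp
  have finE: "finite E" using simple_finite_E[OF sg] .
  have Es: "\<forall>e\<in>E. e \<subseteq> V \<and> card e = 2" using sg unfolding simple_graph_def by simp
  obtain vs where vs: "is_cycle V E vs" and lv: "length vs = g" and g3: "3 \<le> g"
    and gn: "g \<le> n" and mE: "card E \<le> n"
    using unicyclic_facts[OF uni gir] cV by auto
  have dist: "distinct vs" and sV: "set vs \<subseteq> V" and cyE: "cycle_edges vs \<subseteq> E"
    using vs unfolding is_cycle_def by auto
  have csv: "card (set vs) = g" using dist lv distinct_card by blast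
  define k where "k = n - g"
  define D where "D = real n - real g + 2"
  have Dk: "D = real k + 2" unfolding D_def k_def using gn by simp
  have D2: "2 \<le> D" using Dk by simp
  have deg1: "1 \<le> degree E v" if v: "v \<in> V" for v
  proof -
    have "\<not> set vs \<subseteq> {v}"
    proof
      assume "set vs \<subseteq> {v}"
      then have "card (set vs) \<le> card {v}" by (intro card_mono) simp_all
      then show False using csv g3 by simp
    qed
    then obtain u where u: "u \<in> set vs" "u \<noteq> v" by blast
    show ?thesis using connected_degree_pos[OF conn v _ u(2) finE] u sV by blast
  qed
  have deg2: "\<And>v. v \<in> set vs \<Longrightarrow> 2 \<le> degree E v" using cycle_vertex_degree[OF vs finE] .
  define Lf where "Lf = {v \<in> V. degree E v = 1}"
  define N where "N = V - Lf"
  define L where "L = card Lf"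
  have LfV: "Lf \<subseteq> V" unfolding Lf_def by blast
  have finLf: "finite Lf" using finV LfV finite_subset by blast
  have finN: "finite N" unfolding N_def using finV by simp
  have VLN: "V = Lf \<union> N" unfolding N_def using LfV by blast
  have LN: "Lf \<inter> N = {}" unfolding N_def by blast
  have Ndeg: "2 \<le> degree E v" if "v \<in> N" for v
  proof -
    have "v \<in> V" "degree E v \<noteq> 1" using that unfolding N_def Lf_def by auto
    then show ?thesis using deg1[of v] by simp
  qed
  have LfVs: "Lf \<subseteq> V - set vs"
  proof
    fix v assume "v \<in> Lf"
    then have "v \<in> V" "degree E v = 1" unfolding Lf_def by auto
    then show "v \<in> V - set vs" using deg2[of v] by auto
  qed
  have cVs: "card (V - set vs) = k" unfolding k_def using card_Diff_subset[OF _ sV] finV csv cV by simp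
  have Lk: "L \<le> k" unfolding L_def using card_mono[OF _ LfVs] finV cVs by simp
  have cN: "card N = n - L" unfolding N_def L_def using card_Diff_subset[OF finLf LfV] cV by simp
  have Ln: "L \<le> n" using Lk gn k_def by simp
  define x where "x v = degree E v - 2" for v
  define S where "S = (\<Sum>v\<in>N. x v)"
  have xdeg: "degree E v = x v + 2" if "v \<in> N" for v using Ndeg[OF that] unfolding x_def by simp
  have hs: "(\<Sum>v\<in>V. degree E v) = 2 * card E" by (rule handshake[OF sg])
  have sLf: "(\<Sum>v\<in>Lf. degree E v) = L" unfolding L_def Lf_def by simp
  have sN: "(\<Sum>v\<in>N. degree E v) = S + 2 * card N"
  proof -
    have "(\<Sum>v\<in>N. degree E v) = (\<Sum>v\<in>N. x v + 2)" using xdeg by (intro sum.cong) auto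
    also have "\<dots> = (\<Sum>v\<in>N. x v) + (\<Sum>v\<in>N. 2)" by (rule sum.distrib)
    also have "\<dots> = S + 2 * card N" unfolding S_def by simp
    finally show ?thesis .
  qed
  have sV': "(\<Sum>v\<in>V. degree E v) = (\<Sum>v\<in>Lf. degree E v) + (\<Sum>v\<in>N. degree E v)"
    unfolding VLN by (rule sum.union_disjoint[OF finLf finN LN])
  have count: "L + S + 2 * (n - L) = 2 * card E" using hs sV' sLf sN cN by simp
  have SL: "S \<le> L" using count mE Ln by linarith
  have degD: "real (degree E v) \<le> D" if v: "v \<in> V" for v
  proof (cases "v \<in> Lf")
    case True
    then show ?thesis unfolding Lf_def using D2 by simp
  next
    case False
    then have vN: "v \<in> N" unfolding N_def using v by simp
    have "x v \<le> S" unfolding S_def by (rule member_le_sum[OF vN _ finN]) simp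
    then have "degree E v \<le> k + 2" using xdeg[OF vN] SL Lk by simp
    then show ?thesis using Dk by simp
  qed
  define phiv where "phiv v = phi D (degree E v)" for v
  have edge: "sqrt (\<Sum>v\<in>e. (real (degree E v))\<^sup>2) \<le> (\<Sum>v\<in>e. phiv v)" if e: "e \<in> E" for e
  proof -
    obtain a b where ab: "e = {a, b}" "a \<noteq> b" using Es e by (meson card_2_iff)
    have abV: "a \<in> V" "b \<in> V" using Es e ab by auto
    have "sqrt ((real (degree E a))\<^sup>2 + (real (degree E b))\<^sup>2) \<le> phi D (degree E a) + phi D (degree E b)"
      by (rule edge_bound(1)[OF deg1[OF abV(1)] deg1[OF abV(2)] degD[OF abV(1)] degD[OF abV(2)] D2])
    then show ?thesis using ab unfolding phiv_def by simp
  qed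
  define P where "P = (\<Sum>v\<in>V. real (degree E v) * phiv v)"
  have P_edges: "(\<Sum>e\<in>E. \<Sum>v\<in>e. phiv v) = P" unfolding P_def
    by (rule sum_edges_swap[OF finV]) (use Es in blast)
  have c1: "sombor E \<le> P"
  proof -
    have "sombor E \<le> (\<Sum>e\<in>E. \<Sum>v\<in>e. phiv v)" unfolding sombor_def
      by (rule sum_mono) (rule edge)
    then show ?thesis using P_edges by simp
  qed
  define G where "G = (\<Sum>v\<in>N. gg (x v))"
  have Psplit: "P = real L * cc D + real (card N) * q 2 + G"
  proof -
    have "P = (\<Sum>v\<in>Lf. real (degree E v) * phiv v) + (\<Sum>v\<in>N. real (degree E v) * phiv v)"
      unfolding P_def VLN by (rule sum.union_disjoint[OF finLf finN LN])
    moreover have "(\<Sum>v\<in>Lf. real (degree E v) * phiv v) = real L * cc D"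
    proof -
      have "(\<Sum>v\<in>Lf. real (degree E v) * phiv v) = (\<Sum>v\<in>Lf. cc D)"
        by (intro sum.cong) (auto simp: Lf_def phiv_def phi_def)
      then show ?thesis unfolding L_def by simp
    qed
    moreover have "(\<Sum>v\<in>N. real (degree E v) * phiv v) = (\<Sum>v\<in>N. q 2 + gg (x v))"
    proof (rule sum.cong[OF refl])
      fix v assume vN: "v \<in> N"
      have "degree E v \<noteq> 1" using Ndeg[OF vN] by simp
      then have "real (degree E v) * phiv v = q (degree E v)" unfolding phiv_def phi_def q_def by simp
      also have "\<dots> = q 2 + gg (x v)" unfolding gg_def using xdeg[OF vN] by simp
      finally show "real (degree E v) * phiv v = q 2 + gg (x v)" .
    qed
    moreover have "(\<Sum>v\<in>N. q 2 + gg (x v)) = real (card N) * q 2 + G"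
      unfolding G_def by (simp add: sum.distrib)
    ultimately show ?thesis by simp
  qed
  have c3: "G \<le> gg S" unfolding G_def S_def by (rule gg_sum[OF finN])
  have c4: "gg S \<le> gg L" using gg_le[OF SL] .
  have e1: "real L * cc D + real (card N) * q 2 + gg L = real n * q 2 + BB D L"
  proof -
    have cNr: "real (card N) = real n - real L" using cN Ln by simp
    show ?thesis unfolding BB_def q2 cNr by (simp add: algebra_simps)
  qed
  have c5: "BB D L \<le> BB D k" using BB_le[OF D2 Lk] .
  have eT: "real n * q 2 + BB D k = T" unfolding T_def D_def k_def by (rule T_eq[OF gn])
  show "sombor E \<le> 2 * sqrt ((real n - real g + 2)\<^sup>2 + 4)
                     + (real n - real g) * sqrt ((real n - real g + 2)\<^sup>2 + 1)
                     + 2 * sqrt 2 * (real g - 2)"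
    using c1 Psplit c3 c4 e1 c5 eT unfolding T_def by linarith
  assume eq0: "sombor E = 2 * sqrt ((real n - real g + 2)\<^sup>2 + 4)
                     + (real n - real g) * sqrt ((real n - real g + 2)\<^sup>2 + 1)
                     + 2 * sqrt 2 * (real g - 2)"
  then have eq: "sombor E = T" unfolding T_def .
  have t1: "sombor E = P" and t3: "G = gg S" and t4: "gg S = gg L" and t5: "BB D L = BB D k"
    using c1 Psplit c3 c4 e1 c5 eT eq by linarith+
  show "\<exists>vs h. is_cycle V E vs \<and> length vs = g \<and> h \<in> set vs \<and>
                E = cycle_edges vs \<union> (\<lambda>l. {h, l}) ` (V - set vs)"
  proof (cases "k = 0")
    case True
    then have gn0: "g = n" using gn k_def by simp
    have svV: "set vs = V" using card_subset_eq[OF finV sV] csv cV gn0 by simp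
    have ccy: "card (cycle_edges vs) = g" using card_cycle_edges[OF dist] g3 lv by simp
    have "card (cycle_edges vs) \<le> card E" using card_mono[OF finE cyE] .
    then have cyEq: "cycle_edges vs = E" using card_subset_eq[OF finE cyE] ccy mE gn0 by simp
    have h: "vs ! 0 \<in> set vs" using lv g3 by simp
    have "E = cycle_edges vs \<union> (\<lambda>l. {vs ! 0, l}) ` (V - set vs)" using cyEq svV by simp
    then show ?thesis using vs lv h by blast
  next
    case False
    then have k1: "1 \<le> k" by simp
    have Lk': "L = k"
    proof (rule ccontr)
      assume "L \<noteq> k"
      then have "L < k" using Lk by simp
      then show False using BB_less[OF D2] t5 by fastforce
    qed
    have SL': "S = L"
    proof (rule ccontr)
      assume "S \<noteq> L"
      then have "S < L" using SL by simp
      then show False using gg_less t4 by fastforce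
    qed
    have cE: "card E = n" using count SL' Ln by simp
    have S1: "1 \<le> S" using SL' Lk' k1 by simp
    obtain h where hN: "h \<in> N" and xh1: "1 \<le> x h"
    proof -
      have "\<exists>v\<in>N. 1 \<le> x v"
      proof (rule ccontr)
        assume "\<not> (\<exists>v\<in>N. 1 \<le> x v)"
        then have "\<forall>v\<in>N. x v = 0" by auto
        then have "S = 0" unfolding S_def by simp
        then show False using S1 by simp
      qed
      then show ?thesis using that by blast
    qed
    have uniq: "x w = 0" if w: "w \<in> N" "w \<noteq> h" for w
    proof (rule ccontr)
      assume "x w \<noteq> 0"
      then have "1 \<le> x w" by simp
      then have "G < gg S" unfolding G_def S_def
        by (rule gg_sum_strict[of N h w x, OF finN hN w(1) w(2)[symmetric] xh1])
      then show False using t3 by simp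
    qed
    have xh: "x h = S"
    proof -
      have "S = x h + (\<Sum>v\<in>N - {h}. x v)" unfolding S_def by (rule sum.remove[OF finN hN])
      moreover have "(\<Sum>v\<in>N - {h}. x v) = 0" using uniq by (intro sum.neutral) auto
      ultimately show ?thesis by simp
    qed
    have degh: "degree E h = k + 2" using xdeg[OF hN] xh SL' Lk' by simp
    have tight: "sqrt (\<Sum>v\<in>e. (real (degree E v))\<^sup>2) = (\<Sum>v\<in>e. phiv v)" if e: "e \<in> E" for e
    proof (rule sum_eq_termwise[OF finE _ _ e])
      show "\<forall>e\<in>E. sqrt (\<Sum>v\<in>e. (real (degree E v))\<^sup>2) \<le> (\<Sum>v\<in>e. phiv v)" using edge by blast
      show "(\<Sum>e\<in>E. sqrt (\<Sum>v\<in>e. (real (degree E v))\<^sup>2)) = (\<Sum>e\<in>E. \<Sum>v\<in>e. phiv v)"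
        using t1 P_edges unfolding sombor_def by simp
    qed
    have leafadj: "{h, l} \<in> E" if l: "l \<in> Lf" for l
    proof -
      have lV: "l \<in> V" and dl: "degree E l = 1" using l unfolding Lf_def by auto
      have "{e \<in> E. l \<in> e} \<noteq> {}" using dl unfolding degree_def by (metis card.empty zero_neq_one)
      then obtain e where e: "e \<in> E" "l \<in> e" by blast
      obtain y where y: "y \<noteq> l" "e = {l, y}" "y \<in> V" using edge_other[OF sg e] by blast
      have te: "sqrt ((real (degree E l))\<^sup>2 + (real (degree E y))\<^sup>2) = phi D (degree E l) + phi D (degree E y)"
        using tight[OF e(1)] y unfolding phiv_def by simp
      have "real (degree E y) = D"
      proof (rule ccontr)
        assume ne: "real (degree E y) \<noteq> D"
        have "sqrt ((real (degree E l))\<^sup>2 + (real (degree E y))\<^sup>2) < phi D (degree E l) + phi D (degree E y)"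
          by (rule edge_bound(2)[OF deg1[OF lV] deg1[OF y(3)] degD[OF lV] degD[OF y(3)] D2 dl ne])
        then show False using te by simp
      qed
      then have dy: "degree E y = k + 2" using Dk by simp
      then have yN: "y \<in> N" unfolding N_def Lf_def using y(3) by simp
      have "x y = k" using xdeg[OF yN] dy by simp
      then have "y = h" using uniq[OF yN] k1 by fastforce
      then show ?thesis using e y by (simp add: insert_commute)
    qed
    have vsN: "set vs \<subseteq> N"
    proof
      fix v assume "v \<in> set vs"
      then have "v \<in> V" "degree E v \<noteq> 1" using sV deg2 by fastforce+
      then show "v \<in> N" unfolding N_def Lf_def by simp
    qed
    have vsEq: "set vs = N" using card_subset_eq[OF finN vsN] csv cN Lk' k_def gn by simp
    have LfEq: "Lf = V - set vs" unfolding vsEq N_def using LfV by blast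
    have hvs: "h \<in> set vs" using hN vsEq by simp
    define E0 where "E0 = cycle_edges vs \<union> (\<lambda>l. {h, l}) ` Lf"
    have E0E: "E0 \<subseteq> E" unfolding E0_def using cyE leafadj by blast
    have injl: "inj_on (\<lambda>l. {h, l}) Lf"
    proof (rule inj_onI)
      fix a b assume a: "a \<in> Lf" and b: "b \<in> Lf" and ab: "{h, a} = {h, b}"
      have "h \<noteq> b" using b hvs LfEq by blast
      moreover have "(h = h \<and> a = b) \<or> (h = b \<and> a = h)" using ab unfolding doubleton_eq_iff .
      ultimately show "a = b" by blast
    qed
    have disjE0: "cycle_edges vs \<inter> (\<lambda>l. {h, l}) ` Lf = {}"
    proof -
      { fix e assume e1: "e \<in> cycle_edges vs" and e2: "e \<in> (\<lambda>l. {h, l}) ` Lf"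
        then obtain l where l: "l \<in> Lf" "e = {h, l}" by blast
        have "e \<subseteq> set vs" using cycle_edges_subset[OF e1] .
        then have "l \<in> set vs" using l by simp
        then have False using l(1) LfEq by blast }
      then show ?thesis by blast
    qed
    have "card E0 = card (cycle_edges vs) + card ((\<lambda>l. {h, l}) ` Lf)"
      unfolding E0_def by (rule card_Un_disjoint) (use finLf finE cyE finite_subset disjE0 in auto)
    also have "\<dots> = g + k" using card_cycle_edges[OF dist] g3 lv card_image[OF injl] Lk' L_def by simp
    finally have "card E0 = card E" using cE k_def gn by simp
    then have "E0 = E" using card_subset_eq[OF finE E0E] by simp
    then have "E = cycle_edges vs \<union> (\<lambda>l. {h, l}) ` (V - set vs)" unfolding E0_def LfEq by simp
    then show ?thesis using vs lv hvs by blast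
  qed
qed


lemma U_simple: "\<forall>e\<in>U_edges n g. e \<subseteq> U_vertices n \<and> card e = 2" if g3: "3 \<le> g" and gn: "g \<le> n"
proof
  fix e assume "e \<in> U_edges n g"
  then have "e \<in> (\<lambda>i. {i, (i+1) mod g}) ` {..<g} \<or> e \<in> (\<lambda>j. {0, j}) ` {g..<n}" using U_split by blast
  then show "e \<subseteq> U_vertices n \<and> card e = 2"
  proof
    assume "e \<in> (\<lambda>i. {i, (i+1) mod g}) ` {..<g}"
    then obtain i where i: "i < g" "e = {i, (i+1) mod g}" by blast
    have "(i+1) mod g < g" using g3 by simp
    moreover have "(i+1) mod g \<noteq> i" using succ_mod_ne[OF i(1)] g3 by simp
    moreover have "(i+1) mod g < n" "i < n" using \<open>(i+1) mod g < g\<close> i(1) gn by linarith+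
    ultimately show ?thesis using i unfolding U_vertices_def by auto
  next
    assume "e \<in> (\<lambda>j. {0, j}) ` {g..<n}"
    then obtain j where j: "g \<le> j" "j < n" "e = {0, j}" by auto
    then have "j \<noteq> 0" using g3 by simp
    then show ?thesis using j unfolding U_vertices_def by auto
  qed
qed

theorem theorem3p4:
  fixes V :: "'a set" and E :: "'a set set" and n g :: nat
  assumes "unicyclic V E" and "card V = n" and "girth V E = g"
  shows "sombor E \<le> 2 * sqrt ((real n - real g + 2)\<^sup>2 + 4)
                     + (real n - real g) * sqrt ((real n - real g + 2)\<^sup>2 + 1)
                     + 2 * sqrt 2 * (real g - 2)
       \<and> (sombor E = 2 * sqrt ((real n - real g + 2)\<^sup>2 + 4)
                     + (real n - real g) * sqrt ((real n - real g + 2)\<^sup>2 + 1)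
                     + 2 * sqrt 2 * (real g - 2)
          \<longleftrightarrow> graph_iso V E (U_vertices n) (U_edges n g))"
proof (intro conjI iffI)
  show "sombor E \<le> 2 * sqrt ((real n - real g + 2)\<^sup>2 + 4)
                     + (real n - real g) * sqrt ((real n - real g + 2)\<^sup>2 + 1)
                     + 2 * sqrt 2 * (real g - 2)"
    by (rule main_bound(1)[OF assms])
  have sg: "simple_graph V E" using assms(1) unfolding unicyclic_def by simp
  have finV: "finite V" using sg unfolding simple_graph_def by simp
  obtain vs0 where "is_cycle V E vs0" "length vs0 = g" and g3: "3 \<le> g" and gn: "g \<le> n"
    using unicyclic_facts[OF assms(1,3)] assms(2) by auto
  {
    assume eq: "sombor E = 2 * sqrt ((real n - real g + 2)\<^sup>2 + 4)
                     + (real n - real g) * sqrt ((real n - real g + 2)\<^sup>2 + 1)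
                     + 2 * sqrt 2 * (real g - 2)"
    obtain vs h where vs: "is_cycle V E vs" and lv: "length vs = g" and h: "h \<in> set vs"
      and E: "E = cycle_edges vs \<union> (\<lambda>l. {h, l}) ` (V - set vs)"
      using main_bound(2)[OF assms eq] by blast
    show "graph_iso V E (U_vertices n) (U_edges n g)"
      by (rule struct_iso[OF vs lv finV assms(2) h E])
  }
  {
    assume iso: "graph_iso V E (U_vertices n) (U_edges n g)"
    have "sombor E = sombor (U_edges n g)"
      by (rule sombor_iso[OF iso sg U_simple[OF g3 gn]])
    also have "\<dots> = 2 * sqrt ((real n - real g + 2)\<^sup>2 + 4)
                     + (real n - real g) * sqrt ((real n - real g + 2)\<^sup>2 + 1)
                     + 2 * sqrt 2 * (real g - 2)"
      by (rule sombor_U[OF g3 gn])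
    finally show "sombor E = 2 * sqrt ((real n - real g + 2)\<^sup>2 + 4)
                     + (real n - real g) * sqrt ((real n - real g + 2)\<^sup>2 + 1)
                     + 2 * sqrt 2 * (real g - 2)" .
  }
qed


end
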